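(* For every integer $N\geq 1$: (i) for every integer $s\geq 0$, \[\sum_{\lambda\leq N}\frac{\rho_{4^s}(\lambda)}{\lambda}<\frac{3}{\pi^2}\log^2 N+2.774\log N+2.166;\] (ii) \[\sum_{n=1}^{N}\tau(n^2-1)<N\Big(\frac{6}{\pi^2}\log^2N+5.548\log N+4.332\Big).\]
   Context: For integers $k\geq 0$, $d\geq 1$, $\rho_k(d):=\#\{0\leq x<d:\ x^2\equiv k\pmod d\}$. $\tau(m)$ is the number of positive divisors of $m$, with the convention $\tau(0)=0$ (the $n=1$ term contributes nothing). *)

theory Defs
  imports Complex_Main
begin

definition rho :: "nat \<Rightarrow> nat \<Rightarrow> nat" where
  "rho k d = card {x. x < d \<and> x ^ 2 mod d = k mod d}"

definition tau :: "nat \<Rightarrow> nat" where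
  "tau m = (if m = 0 then 0 else card {d. d dvd m})"

end

theory Submission
  imports Defs "HOL-Analysis.Analysis" "HOL-Computational_Algebra.Squarefree"
begin


definition sqfd :: "nat \<Rightarrow> nat" where
  "sqfd m = card {e. e dvd m \<and> squarefree e}"

lemma dvd_from_prime_powers:
  fixes m :: nat and z :: int
  assumes m: "m > 0" and H: "\<And>p. prime p \<Longrightarrow> p dvd m \<Longrightarrow> int p ^ multiplicity p m dvd z"
  shows "int m dvd z"
proof (cases "z = 0")
  case True then show ?thesis by simp
next
  case False
  have "m dvd nat \<bar>z\<bar>"
  proof (rule multiplicity_le_imp_dvd)
    show "m \<noteq> 0" using m by simp
    fix p :: nat assume p: "prime p"
    show "multiplicity p m \<le> multiplicity p (nat \<bar>z\<bar>)"
    proof (cases "p dvd m")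
      case True
      have "int p ^ multiplicity p m dvd \<bar>z\<bar>" using H[OF p True] by simp
      hence "int (p ^ multiplicity p m) dvd int (nat \<bar>z\<bar>)" by simp
      hence "p ^ multiplicity p m dvd nat \<bar>z\<bar>" by (simp only: int_dvd_int_iff)
      then show ?thesis using False p by (intro multiplicity_geI) auto
    next
      case False
      then have "multiplicity p m = 0" by (simp add: not_dvd_imp_multiplicity_0)
      then show ?thesis by simp
    qed
  qed
  hence "int m dvd int (nat \<bar>z\<bar>)" by (simp only: int_dvd_int_iff)
  then show ?thesis by simp
qed

lemma int_dvd_small_eq:
  fixes m x y :: nat
  assumes "int m dvd int x - int y" "x < m" "y < m"
  shows "x = y"
proof -
  from assms(1) obtain k where k: "int x - int y = int m * k" by (auto elim: dvdE)
  show ?thesis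
  proof (rule ccontr)
    assume "x \<noteq> y"
    then have "k \<noteq> 0" using k by auto
    then have "\<bar>int m * k\<bar> \<ge> int m" by (simp add: abs_mult) (metis abs_ge_zero int_one_le_iff_zero_less abs_le_zero_iff linorder_not_le mult_le_cancel_left1 zero_less_abs_iff of_nat_0_le_iff)
    then show False using k assms by linarith
  qed
qed

lemma prod_primes_dvd:
  fixes A :: "nat set"
  assumes "finite A" "\<And>p. p \<in> A \<Longrightarrow> prime p" "\<And>p. p \<in> A \<Longrightarrow> p dvd m"
  shows "\<Prod>A dvd m"
  using assms
proof (induction A rule: finite_induct)
  case empty then show ?case by simp
next
  case (insert p A)
  have "coprime p (\<Prod>A)"
    using insert by (intro prod_coprime_right) (auto intro!: primes_coprime)
  then show ?case using insert by (simp add: divides_mult)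
qed

lemma prod_primes_squarefree:
  fixes A :: "nat set"
  assumes "finite A" "\<And>p. p \<in> A \<Longrightarrow> prime p"
  shows "squarefree (\<Prod>A)"
  using assms by (intro squarefree_prod_coprime) (auto intro: primes_coprime squarefree_prime)

lemma prod_primes_factors:
  fixes A :: "nat set"
  assumes "finite A" "\<And>p. p \<in> A \<Longrightarrow> prime p"
  shows "prime_factors (\<Prod>A) = A"
proof -
  have "0 \<notin> id ` A" using assms(2) not_prime_0 by force
  then have "prime_factors (prod id A) = \<Union>((prime_factors \<circ> id) ` A)"
    using assms by (intro prime_factors_prod) auto
  also have "\<dots> = A" using assms by (auto simp: prime_prime_factors)
  finally show ?thesis by simp
qed

lemma root_split:
  fixes m x c p :: nat
  assumes modd: "odd m" and cop: "coprime c m" and p: "prime p" "p dvd m"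
    and cong: "int m dvd (int x - int c) * (int x + int c)"
  shows "(p dvd x + c \<and> int p ^ multiplicity p m dvd int x + int c) \<or>
         (\<not> p dvd x + c \<and> int p ^ multiplicity p m dvd int x - int c)"
proof -
  have "p ^ multiplicity p m dvd m" by (rule multiplicity_dvd)
  hence "int (p ^ multiplicity p m) dvd int m" by (simp only: int_dvd_int_iff)
  hence pm: "int p ^ multiplicity p m dvd (int x - int c) * (int x + int c)"
    using cong by (metis dvd_trans of_nat_power)
  have p2: "p \<noteq> 2" using modd p(2) by auto
  have pc: "\<not> p dvd c"
  proof
    assume "p dvd c"
    then have "is_unit p" using p(2) cop by (meson coprime_common_divisor)
    then show False using p(1) by simp
  qed
  have ip: "prime (int p)" using p by simp
  have no2: "\<not> int p dvd 2 * int c"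
  proof
    assume "int p dvd 2 * int c"
    hence "int p dvd int (2 * c)" by simp
    hence "p dvd 2 * c" by (simp only: int_dvd_int_iff)
    hence "p dvd 2 \<or> p dvd c" using p(1) prime_dvd_mult_nat by blast
    then show False using pc p2 p(1) by (metis primes_dvd_imp_eq two_is_prime_nat)
  qed
  show ?thesis
  proof (cases "p dvd x + c")
    case True
    have "\<not> int p dvd int x - int c"
    proof
      assume a: "int p dvd int x - int c"
      have "int p dvd int x + int c" using True by (metis of_nat_add int_dvd_int_iff)
      from dvd_diff[OF this a] have "int p dvd 2 * int c" by simp
      then show False using no2 by simp
    qed
    hence "coprime (int p) (int x - int c)" using ip by (simp add: prime_imp_coprime)
    hence "coprime (int p ^ multiplicity p m) (int x - int c)" by simp
    hence "int p ^ multiplicity p m dvd int x + int c" using pm coprime_dvd_mult_right_iff by blast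
    then show ?thesis using True by blast
  next
    case False
    have "\<not> int p dvd int x + int c" using False by (metis of_nat_add int_dvd_int_iff)
    hence "coprime (int p) (int x + int c)" using ip by (simp add: prime_imp_coprime)
    hence "coprime (int p ^ multiplicity p m) (int x + int c)" by simp
    hence "int p ^ multiplicity p m dvd int x - int c" using pm coprime_dvd_mult_left_iff by blast
    then show ?thesis using False by blast
  qed
qed

lemma sq_cong_int:
  fixes m x c :: nat
  assumes "x^2 mod m = c^2 mod m"
  shows "int m dvd (int x - int c) * (int x + int c)"
proof -
  have "int (x^2) mod int m = int (c^2) mod int m" using assms by (metis of_nat_mod)
  hence "int m dvd int (x^2) - int (c^2)" by (simp add: mod_eq_dvd_iff)
  moreover have "int (x^2) - int (c^2) = (int x - int c) * (int x + int c)"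
    by (simp add: algebra_simps power2_eq_square)
  ultimately show ?thesis by simp
qed

lemma rho_odd_le_sqfd:
  fixes c m :: nat
  assumes modd: "odd m" and cop: "coprime c m"
  shows "rho (c^2) m \<le> sqfd m"
proof -
  have m0: "m > 0" using modd by (cases m) auto
  define S where "S = {x. x < m \<and> x^2 mod m = c^2 mod m}"
  define T where "T x = {p. prime p \<and> p dvd m \<and> p dvd x + c}" for x
  define E where "E = {e. e dvd m \<and> squarefree e}"
  have finT: "finite (T x)" for x
    by (rule finite_subset[of _ "{..m}"]) (auto simp: T_def m0 dvd_imp_le)
  have Tprime: "p \<in> T x \<Longrightarrow> prime p" for p x by (simp add: T_def)
  have finE: "finite E"
    by (rule finite_subset[of _ "{..m}"]) (auto simp: E_def m0 dvd_imp_le)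
  have im: "(\<lambda>x. \<Prod>(T x)) ` S \<subseteq> E"
  proof
    fix e assume "e \<in> (\<lambda>x. \<Prod>(T x)) ` S"
    then obtain x where e: "e = \<Prod>(T x)" by blast
    have "\<Prod>(T x) dvd m" using finT by (rule prod_primes_dvd) (auto simp: T_def)
    moreover have "squarefree (\<Prod>(T x))" using finT Tprime by (rule prod_primes_squarefree)
    ultimately show "e \<in> E" using e by (simp add: E_def)
  qed
  have inj: "inj_on (\<lambda>x. \<Prod>(T x)) S"
  proof (rule inj_onI)
    fix x y assume x: "x \<in> S" and y: "y \<in> S" and eq: "\<Prod>(T x) = \<Prod>(T y)"
    have TT: "T x = T y"
      using prod_primes_factors[OF finT[of x], of ] prod_primes_factors[OF finT[of y]] eq Tprime
      by metis
    have cx: "int m dvd (int x - int c) * (int x + int c)" using x by (intro sq_cong_int) (simp add: S_def)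
    have cy: "int m dvd (int y - int c) * (int y + int c)" using y by (intro sq_cong_int) (simp add: S_def)
    have "int m dvd int x - int y"
    proof (rule dvd_from_prime_powers[OF m0])
      fix p :: nat assume p: "prime p" "p dvd m"
      note rx = root_split[OF modd cop p cx] and ry = root_split[OF modd cop p cy]
      have iff: "p dvd x + c \<longleftrightarrow> p dvd y + c" using TT p unfolding T_def by blast
      have e1: "int x - int y = (int x + int c) - (int y + int c)" by simp
      have e2: "int x - int y = (int x - int c) - (int y - int c)" by simp
      show "int p ^ multiplicity p m dvd int x - int y"
        using rx ry iff e1 e2 by (metis dvd_diff)
    qed
    then show "x = y" using int_dvd_small_eq x y by (auto simp: S_def)
  qed
  have "card S \<le> card E" using card_inj_on_le[OF inj im finE] .
  then show ?thesis unfolding rho_def sqfd_def S_def E_def by simp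
qed


lemma rho_le: "rho k d \<le> d"
proof -
  have "{x. x < d \<and> x ^ 2 mod d = k mod d} \<subseteq> {..<d}" by auto
  then have "rho k d \<le> card {..<d}" unfolding rho_def by (intro card_mono) auto
  then show ?thesis by simp
qed

lemma rho_mult_le:
  fixes a b k :: nat
  assumes a: "a > 0" and b: "b > 0" and cop: "coprime a b"
  shows "rho k (a * b) \<le> rho k a * rho k b"
proof -
  define S where "S d = {x. x < d \<and> x ^ 2 mod d = k mod d}" for d
  have fin: "finite (S d)" for d by (simp add: S_def)
  have im: "(\<lambda>x. (x mod a, x mod b)) ` S (a*b) \<subseteq> S a \<times> S b"
  proof
    fix z assume "z \<in> (\<lambda>x. (x mod a, x mod b)) ` S (a*b)"
    then obtain x where z: "z = (x mod a, x mod b)" and x: "x < a*b" "x^2 mod (a*b) = k mod (a*b)"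
      by (auto simp: S_def)
    have "(x mod a)^2 mod a = x^2 mod a" by (simp add: power_mod)
    also have "\<dots> = (x^2 mod (a*b)) mod a" by (simp add: mod_mod_cancel)
    also have "\<dots> = k mod a" using x(2) by (simp add: mod_mod_cancel)
    finally have 1: "(x mod a)^2 mod a = k mod a" .
    have "(x mod b)^2 mod b = x^2 mod b" by (simp add: power_mod)
    also have "\<dots> = (x^2 mod (a*b)) mod b" by (simp add: mod_mod_cancel)
    also have "\<dots> = k mod b" using x(2) by (simp add: mod_mod_cancel)
    finally have 2: "(x mod b)^2 mod b = k mod b" .
    show "z \<in> S a \<times> S b" using 1 2 z a b by (simp add: S_def)
  qed
  have inj: "inj_on (\<lambda>x. (x mod a, x mod b)) (S (a*b))"
  proof (rule inj_onI)
    fix x y assume x: "x \<in> S (a*b)" and y: "y \<in> S (a*b)" and eq: "(x mod a, x mod b) = (y mod a, y mod b)"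
    have "int x mod int a = int y mod int a" using eq by (metis of_nat_mod prod.inject)
    then have "int a dvd int x - int y" by (simp add: mod_eq_dvd_iff)
    moreover have "int x mod int b = int y mod int b" using eq by (metis of_nat_mod prod.inject)
    then have "int b dvd int x - int y" by (simp add: mod_eq_dvd_iff)
    moreover have "coprime (int a) (int b)" using cop by simp
    ultimately have "int a * int b dvd int x - int y" by (simp add: divides_mult)
    then have "int (a*b) dvd int x - int y" by simp
    then show "x = y" using x y by (metis (mono_tags) S_def int_dvd_small_eq mem_Collect_eq)
  qed
  have "card (S (a*b)) \<le> card (S a \<times> S b)" using card_inj_on_le[OF inj im] fin by simp
  then show ?thesis by (simp add: rho_def S_def card_cartesian_product)
qed

lemma rho_two: "rho k 2 \<le> 1"
proof -
  have "{x::nat. x < 2 \<and> x ^ 2 mod 2 = k mod 2} \<subseteq> {k mod 2}"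
  proof
    fix x assume "x \<in> {x::nat. x < 2 \<and> x ^ 2 mod 2 = k mod 2}"
    then have "x < 2" "x^2 mod 2 = k mod 2" by auto
    moreover have "x^2 mod 2 = x" if "x < 2" for x :: nat using that by (cases x) (auto simp: power2_eq_square)
    ultimately show "x \<in> {k mod 2}" by simp
  qed
  then have "rho k 2 \<le> card {k mod 2}" unfolding rho_def by (intro card_mono) auto
  then show ?thesis by simp
qed

lemma rho_four_one: "rho 1 4 \<le> 2"
proof -
  have "{x::nat. x < 4 \<and> x ^ 2 mod 4 = 1 mod 4} \<subseteq> {1, 3}"
  proof
    fix x :: nat assume "x \<in> {x::nat. x < 4 \<and> x ^ 2 mod 4 = 1 mod 4}"
    then have "x < 4" "x^2 mod 4 = 1" by auto
    then have "x = 0 \<or> x = 1 \<or> x = 2 \<or> x = 3" "x^2 mod 4 = 1" by linarith+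
    then show "x \<in> {1,3}" by auto
  qed
  then have "rho 1 4 \<le> card {1::nat, 3}" unfolding rho_def by (intro card_mono) auto
  then show ?thesis by simp
qed

lemma rho_4k_4m:
  fixes k m :: nat
  assumes m: "m > 0"
  shows "rho (4 * k) (4 * m) \<le> 2 * rho k m"
proof -
  define S where "S = {x. x < 4*m \<and> x ^ 2 mod (4*m) = (4*k) mod (4*m)}"
  define R where "R = {y. y < m \<and> y ^ 2 mod m = k mod m}"
  define f where "f x = ((x div 2) mod m, (x div 2) div m)" for x :: nat
  have ev: "even x" if "x \<in> S" for x
  proof -
    from that have "x ^ 2 mod (4*m) = (4*k) mod (4*m)" by (simp add: S_def)
    then have "(x ^ 2 mod (4*m)) mod 4 = ((4*k) mod (4*m)) mod 4" by simp
    then have "x^2 mod 4 = 0" by (simp add: mod_mod_cancel)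
    then have "4 dvd x^2" by (simp add: dvd_eq_mod_eq_0)
    then have "2 dvd x^2" by (rule dvd_trans[rotated]) simp
    then show "even x" by simp
  qed
  have im: "f ` S \<subseteq> R \<times> {0, 1}"
  proof
    fix z assume "z \<in> f ` S"
    then obtain x where z: "z = f x" and x: "x \<in> S" by blast
    obtain y where y: "x = 2*y" using ev[OF x] by blast
    have xl: "x < 4*m" "x ^ 2 mod (4*m) = (4*k) mod (4*m)" using x by (auto simp: S_def)
    have x2: "x^2 = 4 * y^2" using y by (simp add: power_mult_distrib)
    have "4 * (y^2 mod m) = x^2 mod (4*m)" unfolding x2 by (simp only: mult_mod_right)
    also have "\<dots> = 4*k mod (4*m)" by (rule xl(2))
    also have "\<dots> = 4 * (k mod m)" by (simp only: mult_mod_right)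
    finally have "4 * (y^2 mod m) = 4 * (k mod m)" .
    then have c: "y^2 mod m = k mod m" by simp
    have "(y mod m)^2 mod m = k mod m" using c by (simp add: power_mod)
    moreover have "y div m < 2" using xl(1) y m by (simp add: div_less_iff_less_mult)
    ultimately show "z \<in> R \<times> {0,1}" using z y m by (auto simp: f_def R_def)
  qed
  have inj: "inj_on f S"
  proof (rule inj_onI)
    fix x x' assume x: "x \<in> S" and x': "x' \<in> S" and eq: "f x = f x'"
    obtain y where y: "x = 2*y" using ev[OF x] by blast
    obtain y' where y': "x' = 2*y'" using ev[OF x'] by blast
    have "y mod m = y' mod m" "y div m = y' div m" using eq y y' by (auto simp: f_def)
    then have "y = y'" by (metis div_mult_mod_eq)
    then show "x = x'" using y y' by simp
  qed
  have "finite (R \<times> {0::nat, 1})" by (simp add: R_def)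
  then have "card S \<le> card (R \<times> {0::nat,1})" using card_inj_on_le[OF inj im] by simp
  also have "\<dots> = 2 * card R" by (simp add: card_cartesian_product)
  finally show ?thesis by (simp add: rho_def S_def R_def)
qed


lemma rho_one_pow2: "rho 1 (2^a) \<le> 4"
proof (cases "a \<le> 2")
  case True
  have "rho 1 (2^a) \<le> 2^a" by (rule rho_le)
  also have "(2::nat)^a \<le> 2^2" using True by (intro power_increasing) auto
  finally show ?thesis by simp
next
  case False
  define q where "q = (2::nat)^(a-3)"
  have a2: "a = (a - 3) + 3" using False by simp
  have M: "(2::nat)^a = 8*q" unfolding q_def by (subst a2) (simp add: power_add)
  have q0: "q > 0" by (simp add: q_def)
  have "{x::nat. x < 2^a \<and> x ^ 2 mod 2^a = 1 mod 2^a} \<subseteq> {1, 4*q+1, 4*q-1, 8*q-1}"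
  proof
    fix x :: nat assume "x \<in> {x::nat. x < 2^a \<and> x ^ 2 mod 2^a = 1 mod 2^a}"
    then have xl: "x < 8*q" and xc: "x^2 mod (8*q) = 1" using M q0 by auto
    have "x^2 mod 2 = (x^2 mod (8*q)) mod 2" by (simp add: mod_mod_cancel)
    then have "x^2 mod 2 = 1" using xc by simp
    then have "odd (x^2)" by (simp only: odd_iff_mod_2_eq_one)
    then have xo: "odd x" by simp
    then obtain u where u: "x = 2*u + 1" by (metis oddE)
    have "x^2 = (8*q) * (x^2 div (8*q)) + 1" using xc by (metis div_mult_mod_eq mult.commute)
    moreover have "x^2 = 4 * (u * (u+1)) + 1" using u by (simp add: power2_eq_square algebra_simps)
    ultimately have "4 * (u * (u+1)) = 4 * (2 * q * (x^2 div (8*q)))" by simp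
    then have "u * (u+1) = (2*q) * (x^2 div (8*q))" by simp
    then have qd: "(2*q) dvd u * (u+1)" by simp
    have q2: "2*q = 2^(a-2)" unfolding q_def by (subst a2) simp
    show "x \<in> {1, 4*q+1, 4*q-1, 8*q-1}"
    proof (cases "even u")
      case True
      then have "coprime (2*q) (u+1)" unfolding q2 by (simp add: coprime_power_left_iff)
      then have "(2*q) dvd u" using qd coprime_dvd_mult_left_iff by blast
      then obtain r where r: "u = 2*q * r" by blast
      have xr: "x = 4*q*r + 1" using u r by simp
      have "4*q*r < 4*q*2" using xl xr by linarith
      then have "r < 2" using q0 by simp
      then have "r = 0 \<or> r = 1" by presburger
      then show ?thesis using xr by auto
    next
      case False
      then have "coprime (2*q) u" unfolding q2 by (simp add: coprime_power_left_iff)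
      then have "(2*q) dvd u + 1" using qd coprime_dvd_mult_right_iff by blast
      then obtain r where r: "u + 1 = 2*q * r" by blast
      have xr: "x + 1 = 4*q*r" using u r by simp
      have "4*q*r \<le> 4*q*2" using xl xr by linarith
      then have "r \<le> 2" using q0 by simp
      moreover have "r \<noteq> 0" using xr by (metis add_is_0 mult_0_right zero_neq_one)
      ultimately have "r = 1 \<or> r = 2" by presburger
      then show ?thesis using xr by auto
    qed
  qed
  then have "rho 1 (2^a) \<le> card {1, 4*q+1, 4*q-1, 8*q-1}" unfolding rho_def by (intro card_mono) auto
  also have "\<dots> \<le> 4" by (intro order.trans[OF card_insert_le_m1]) auto
  finally show ?thesis .
qed

function w :: "nat \<Rightarrow> nat" where
  "w k = (if k = 0 then 0 else if even k then w (k div 2) else sqfd k)"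
  by auto
termination by (relation "Wellfounded.measure id") auto

declare w.simps[simp del]

lemma w_odd: "odd k \<Longrightarrow> w k = sqfd k"
  by (subst w.simps) (auto elim: oddE)

lemma w_double: "k > 0 \<Longrightarrow> w (2*k) = w k"
  by (subst w.simps) simp

lemma rho_odd_pow4: "odd d \<Longrightarrow> rho (4^s) d \<le> sqfd d"
proof -
  assume d: "odd d"
  have "coprime (2^s) d" using d by simp
  then have "rho ((2^s)^2) d \<le> sqfd d" using d by (intro rho_odd_le_sqfd)
  moreover have "((2::nat)^s)^2 = 4^s"
  proof -
    have "((2::nat)^s)^2 = (2^2)^s" by (simp only: power_mult[symmetric] mult.commute)
    then show ?thesis by simp
  qed
  ultimately show ?thesis by simp
qed

lemma rho_2odd_pow4: "odd m \<Longrightarrow> rho (4^s) (2*m) \<le> sqfd m"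
proof -
  assume m: "odd m"
  have m0: "m > 0" using m by (cases m) auto
  have "rho (4^s) (2*m) \<le> rho (4^s) 2 * rho (4^s) m" using m m0 by (intro rho_mult_le) auto
  also have "\<dots> \<le> 1 * rho (4^s) m" using rho_two by (intro mult_right_mono) auto
  also have "\<dots> \<le> sqfd m" using rho_odd_pow4[OF m] by simp
  finally show ?thesis .
qed

lemma rho_4m_pow4: "m > 0 \<Longrightarrow> rho (4^(Suc s)) (4*m) \<le> 2 * rho (4^s) m"
  using rho_4k_4m[of m "4^s"] by simp

lemma rho_one_4odd: "odd m \<Longrightarrow> rho 1 (4*m) \<le> 2 * sqfd m"
proof -
  assume m: "odd m"
  have m0: "m > 0" using m by (cases m) auto
  have "coprime (4::nat) m" using coprime_mult_left_iff[of 2 2 m] m by simp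
  then have "rho 1 (4*m) \<le> rho 1 4 * rho 1 m" using m0 by (intro rho_mult_le) auto
  also have "\<dots> \<le> 2 * rho 1 m" using rho_four_one by (intro mult_right_mono) auto
  also have "\<dots> \<le> 2 * sqfd m" using rho_odd_pow4[OF m, of 0] by simp
  finally show ?thesis .
qed

lemma rho_one_2a:
  assumes "k > 0" "a \<ge> 3"
  shows "rho 1 (2^a * k) \<le> 4 * w k"
  using assms
proof (induction k arbitrary: a rule: less_induct)
  case (less k)
  show ?case
  proof (cases "even k")
    case True
    then obtain j where j: "k = 2*j" by blast
    have j0: "j > 0" "j < k" using less.prems j by auto
    have "rho 1 (2^a * k) = rho 1 (2^(a+1) * j)" by (simp add: j ac_simps)
    also have "\<dots> \<le> 4 * w j" using less.IH[OF j0(2) j0(1), of "Suc a"] less.prems by (simp add: ac_simps)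
    also have "w j = w k" using w_double[OF j0(1)] j by simp
    finally show ?thesis .
  next
    case False
    have k0: "k > 0" using less.prems by simp
    have "rho 1 (2^a * k) \<le> rho 1 (2^a) * rho 1 k" using False k0 by (intro rho_mult_le) auto
    also have "\<dots> \<le> 4 * rho 1 k" using rho_one_pow2 by (intro mult_right_mono) auto
    also have "\<dots> \<le> 4 * sqfd k" using rho_odd_pow4[OF False, of 0] by simp
    also have "sqfd k = w k" using w_odd[OF False] by simp
    finally show ?thesis by simp
  qed
qed

lemma rho_one_8k: "k > 0 \<Longrightarrow> rho 1 (8 * k) \<le> 4 * w k"
  using rho_one_2a[of k 3] by simp


lemma pi_bounds: "3.14 \<le> pi" "pi \<le> 3.15"
  using pi_approx by auto

lemma ln3_le: "ln (3::real) \<le> 6/5"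
proof -
  have "(1 + (6/5) / real 10) ^ 10 \<le> exp (6/5::real)"
    by (rule exp_ge_one_plus_x_over_n_power_n) auto
  moreover have "(3::real) \<le> (1 + (6/5) / real 10) ^ 10" by (simp add: power_divide)
  ultimately have "3 \<le> exp (6/5::real)" by linarith
  then show ?thesis by (metis exp_gt_zero ln_exp ln_le_cancel_iff zero_less_numeral)
qed

lemma ln3_ge0: "ln (3::real) \<ge> 0" by simp

lemma ln_diff_eq: "a > 0 \<Longrightarrow> b > 0 \<Longrightarrow> ln a - ln (b::real) = ln (1 + (a-b)/b)"
proof -
  assume "a > 0" "b > 0"
  then have "1 + (a-b)/b = a/b" by (simp add: field_simps)
  then show ?thesis using \<open>a > 0\<close> \<open>b > 0\<close> by (simp add: ln_div)
qed

lemma odd_harm_bounds: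
  fixes K :: nat
  assumes "K \<ge> 1"
  shows "ln (2*real K+1)/2 + 2/5 \<le> (\<Sum>k<K. 1 / (2*real k+1)) \<and> (\<Sum>k<K. 1 / (2*real k+1)) \<le> ln (2*real K-1)/2 + 1"
  using assms
proof (induction K rule: dec_induct)
  case base
  show ?case using ln3_le by simp
next
  case (step K)
  define H where "H = (\<Sum>k<K. 1 / (2*real k+1))"
  have HS: "(\<Sum>k<Suc K. 1 / (2*real k+1)) = H + 1/(2*real K+1)" by (simp add: H_def)
  have K1: "real K \<ge> 1" using step by simp
  have l1: "ln (2*real K+3) - ln (2*real K+1) \<le> 2/(2*real K+1)"
  proof -
    have "ln (2*real K+3) - ln (2*real K+1) = ln (1 + 2/(2*real K+1))"
      by (subst ln_diff_eq) auto
    also have "\<dots> \<le> 2/(2*real K+1)" by (rule ln_add_one_self_le_self) auto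
    finally show ?thesis .
  qed
  have l2: "2/(2*real K+1) \<le> ln (2*real K+1) - ln (2*real K-1)"
  proof -
    have "ln (2*real K-1) - ln (2*real K+1) = ln (1 + (-2/(2*real K+1)))"
      using K1 by (subst ln_diff_eq) auto
    also have "\<dots> \<le> -2/(2*real K+1)" using K1 by (intro ln_add_one_self_le_self2) (auto simp: field_simps)
    finally show ?thesis by simp
  qed
  have e1: "2 * real (Suc K) + 1 = 2*real K+3" by simp
  have e2: "2 * real (Suc K) - 1 = 2*real K+1" by simp
  show ?case using step.IH l1 l2 unfolding HS e1 e2 H_def[symmetric] by simp
qed


lemma odd_basel: "(\<lambda>k. 1 / (2*real k+1)^2) sums (pi^2/8)"
proof -
  have b: "(\<lambda>n. 1 / real ((n + 1)^2)) sums (pi^2 / 6)" by (rule inverse_squares_sums)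
  have g: "(\<lambda>n. \<Sum>i\<in>{n*2..<n*2+2}. 1 / real ((i + 1)^2)) sums (pi^2 / 6)"
    by (rule sums_group[OF b]) simp
  have ge: "(\<lambda>n. \<Sum>i\<in>{n*2..<n*2+2}. 1 / real ((i + 1)^2)) = (\<lambda>n. 1/(2*real n+1)^2 + 1/(4 * real ((n+1)^2)))"
  proof
    fix n :: nat
    have "{n*2..<n*2+2} = {2*n, 2*n+1}" by auto
    then show "(\<Sum>i\<in>{n*2..<n*2+2}. 1 / real ((i + 1)^2)) = 1/(2*real n+1)^2 + 1/(4 * real ((n+1)^2))"
      by (simp add: power2_eq_square algebra_simps)
  qed
  have q: "(\<lambda>n. 1/(4 * real ((n+1)^2))) sums (pi^2/24)"
    using sums_mult[OF b, of "1/4"] by simp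
  have "(\<lambda>n. (1/(2*real n+1)^2 + 1/(4 * real ((n+1)^2))) - 1/(4 * real ((n+1)^2))) sums (pi^2/6 - pi^2/24)"
    using sums_diff[OF g[unfolded ge] q] .
  then show ?thesis by simp
qed

lemma odd_sq_partial_le: "(\<Sum>k<K. 1 / (2*real k+1)^2) \<le> pi^2/8"
  using sum_le_suminf[OF sums_summable[OF odd_basel], of "{..<K}"] sums_unique[OF odd_basel] by simp

lemma odd_sq_tail_aux:
  assumes "K \<ge> 1"
  shows "(\<Sum>k<K+m. 1 / (2*real k+1)^2) \<le> (\<Sum>k<K. 1 / (2*real k+1)^2) + 1/(4*K) - 1/(4*(K+m))"
proof (induction m)
  case 0 then show ?case by simp
next
  case (Suc m)
  define j where "j = real (K + m)"
  have j1: "j \<ge> 1" using assms by (simp add: j_def)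
  have "1 / (2*j+1)^2 \<le> 1/(4*j) - 1/(4*(j+1))"
  proof -
    have "1/(4*j) - 1/(4*(j+1)) = 1/(4*j*(j+1))" using j1 by (simp add: field_simps)
    also have "1 / (2*j+1)^2 \<le> 1/(4*j*(j+1))"
    proof -
      have "4*j*(j+1) \<le> (2*j+1)^2" by (simp add: power2_eq_square algebra_simps)
      moreover have "0 < 4*j*(j+1)" using j1 by simp
      ultimately show ?thesis by (intro frac_le) auto
    qed
    finally show ?thesis by simp
  qed
  then show ?case using Suc by (simp add: j_def algebra_simps)
qed

lemma odd_sq_partial_ge:
  assumes "K \<ge> 1"
  shows "pi^2/8 - 1/(4*K) \<le> (\<Sum>k<K. 1 / (2*real k+1)^2)"
proof -
  define c where "c = (\<Sum>k<K. 1 / (2*real k+1)^2) + 1/(4*K)"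
  have "(\<Sum>k<n. 1 / (2*real k+1)^2) \<le> c" for n
  proof -
    have "(\<Sum>k<n. 1 / (2*real k+1)^2) \<le> (\<Sum>k<K+n. 1 / (2*real k+1)^2)"
      by (intro sum_mono2) auto
    also have "\<dots> \<le> c - 1/(4*(K+n))" using odd_sq_tail_aux[OF assms, of n] by (simp add: c_def)
    also have "\<dots> \<le> c" by simp
    finally show ?thesis .
  qed
  then have "suminf (\<lambda>k. 1 / (2*real k+1)^2) \<le> c"
    by (intro suminf_le_const sums_summable[OF odd_basel])
  then show ?thesis using sums_unique[OF odd_basel] by (simp add: c_def)
qed


lemma ln_over_sq_mono:
  fixes x y :: real
  assumes "3 \<le> x" "x \<le> y"
  shows "ln y / y^2 \<le> ln x / x^2"
proof -
  have e: "exp 1 \<le> x" using exp_le assms by linarith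
  have 1: "ln y / y \<le> ln x / x" by (rule ln_x_over_x_mono[OF e assms(2)])
  have 2: "1 / y \<le> 1 / x" using assms by (intro divide_left_mono) auto
  have 3: "0 \<le> ln y / y" using assms by simp
  have 4: "0 \<le> 1/y" using assms by simp
  have "(ln y / y) * (1/y) \<le> (ln x / x) * (1/x)"
    using 1 2 3 4 by (intro mult_mono) (auto intro: order.trans)
  then show ?thesis by (simp add: power2_eq_square)
qed

definition G :: "real \<Rightarrow> real" where "G u = (ln u + 1) / (2*u)"

lemma G_deriv: "u > 0 \<Longrightarrow> (G has_real_derivative (- ln u / (2*u^2))) (at u)"
  unfolding G_def
  by (auto intro!: derivative_eq_intros simp: field_simps power2_eq_square)

lemma G_step:
  fixes a :: real
  assumes "a = 1 \<or> a \<ge> 3"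
  shows "ln (a+2) / (a+2)^2 \<le> G a - G (a+2)"
proof (cases "a \<ge> 3")
  case True
  obtain z where z: "a < z" "z < a+2" "G (a+2) - G a = (a + 2 - a) * (- ln z / (2*z^2))"
    using MVT2[of a "a+2" G "\<lambda>u. - ln u / (2*u^2)"] G_deriv True by force
  have "G a - G (a+2) = ln z / z^2" using z(3) by simp
  moreover have "ln (a+2) / (a+2)^2 \<le> ln z / z^2"
    using z True by (intro ln_over_sq_mono) auto
  ultimately show ?thesis by simp
next
  case False
  then have a: "a = 1" using assms by simp
  have "ln 3 / 9 \<le> 1/2 - (ln 3 + 1) / (6::real)" using ln3_le by (simp add: field_simps)
  then show ?thesis using a by (simp add: G_def)
qed

lemma B_bound:
  fixes K :: nat
  assumes "K \<ge> 1"
  shows "(\<Sum>k\<in>{1..<K}. ln (2*real k+1) / (2*real k+1)^2) \<le> 1/2 - G (2*real K - 1)"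
  using assms
proof (induction K rule: dec_induct)
  case base then show ?case by (simp add: G_def)
next
  case (step K)
  have s1: "(\<Sum>k\<in>{1..<Suc K}. ln (2*real k+1) / (2*real k+1)^2)
      = (\<Sum>k\<in>{1..<K}. ln (2*real k+1) / (2*real k+1)^2) + ln (2*real K+1) / (2*real K+1)^2"
    using step(1) by simp
  have s2: "ln (2*real K+1) / (2*real K+1)^2 \<le> G (2*real K - 1) - G (2*real K + 1)"
  proof -
    have "2*real K - 1 = 1 \<or> 2*real K - 1 \<ge> 3" using step(1) by (cases "K = 1") auto
    from G_step[OF this] show ?thesis by (simp add: algebra_simps)
  qed
  have eq: "2 * real (Suc K) - 1 = 2*real K + 1" by simp
  show ?case unfolding eq s1 using step.IH s2 by linarith
qed

lemma lnsq_deriv: "u > 0 \<Longrightarrow> ((\<lambda>u. (ln u)^2/4) has_real_derivative (ln u / (2*u))) (at u)"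
  by (auto intro!: derivative_eq_intros simp: field_simps power2_eq_square)

lemma Lambda_step:
  fixes a :: real
  assumes "a \<ge> 3"
  shows "((ln (a+2))^2 - (ln a)^2)/4 \<le> ln a / a"
proof -
  obtain z where z: "a < z" "z < a+2" "(ln (a+2))^2/4 - (ln a)^2/4 = (a + 2 - a) * (ln z / (2*z))"
    using MVT2[of a "a+2" "\<lambda>u. (ln u)^2/4" "\<lambda>u. ln u / (2*u)"] lnsq_deriv assms by force
  have e: "exp 1 \<le> a" using exp_le assms by linarith
  have "ln z / z \<le> ln a / a" using z by (intro ln_x_over_x_mono[OF e]) auto
  then show ?thesis using z(3) by (simp add: field_simps)
qed

lemma Lambda_bound:
  fixes K :: nat
  assumes "K \<ge> 1"
  shows "((ln (2*real K+1))^2 - (ln 3)^2)/4 \<le> (\<Sum>k<K. ln (2*real k+1) / (2*real k+1))"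
  using assms
proof (induction K rule: dec_induct)
  case base then show ?case by simp
next
  case (step K)
  have "((ln (2*real K+3))^2 - (ln (2*real K+1))^2)/4 \<le> ln (2*real K+1) / (2*real K+1)"
    using Lambda_step[of "2*real K+1"] step(1) by (simp add: algebra_simps)
  then show ?case using step.IH by (simp add: algebra_simps)
qed


definition oddset :: "real \<Rightarrow> nat set" where "oddset y = {f. odd f \<and> real f \<le> y}"
definition Osum :: "real \<Rightarrow> real" where "Osum y = (\<Sum>f\<in>oddset y. 1 / real f)"
definition Qset :: "real \<Rightarrow> nat set" where "Qset y = {e. odd e \<and> squarefree e \<and> real e \<le> y}"
definition Psum :: "real \<Rightarrow> real" where "Psum y = (\<Sum>e\<in>Qset y. 1 / real e)"

lemma finite_oddset [simp]: "finite (oddset y)"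
  by (rule finite_subset[of _ "{..nat \<lfloor>y\<rfloor>}"]) (auto simp: oddset_def intro: le_nat_floor)

lemma finite_Qset [simp]: "finite (Qset y)"
  by (rule finite_subset[of _ "{..nat \<lfloor>y\<rfloor>}"]) (auto simp: Qset_def intro: le_nat_floor)

lemma oddset_repr:
  assumes "y \<ge> 1"
  obtains K :: nat where "K \<ge> 1" "oddset y = (\<lambda>k. 2*k+1) ` {..<K}" "2*real K - 1 \<le> y" "y < 2*real K + 1"
proof -
  define K where "K = nat \<lfloor>(y+1)/2\<rfloor>"
  have fl: "real_of_int \<lfloor>(y+1)/2\<rfloor> \<le> (y+1)/2" "(y+1)/2 < real_of_int \<lfloor>(y+1)/2\<rfloor> + 1" by linarith+
  have fl0: "\<lfloor>(y+1)/2\<rfloor> \<ge> 1" using assms by (subst le_floor_iff) simp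
  have RK: "real K = real_of_int \<lfloor>(y+1)/2\<rfloor>" using fl0 by (simp add: K_def)
  have K1: "K \<ge> 1"
  proof -
    have "nat 1 \<le> nat \<lfloor>(y+1)/2\<rfloor>" using fl0 by (rule nat_mono)
    then show ?thesis by (simp add: K_def)
  qed
  have "oddset y = (\<lambda>k. 2*k+1) ` {..<K}"
  proof (intro set_eqI iffI)
    fix f assume "f \<in> oddset y"
    then have f: "odd f" "real f \<le> y" by (auto simp: oddset_def)
    then obtain k where k: "f = 2*k+1" by (metis oddE)
    have "real k + 1 \<le> (y+1)/2" using f k by simp
    then have "of_int (int k + 1) \<le> (y+1)/2" by simp
    then have "int k + 1 \<le> \<lfloor>(y+1)/2\<rfloor>" by (simp only: le_floor_iff)
    then have "int k < \<lfloor>(y+1)/2\<rfloor>" by simp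
    then have "k < K" unfolding K_def by (simp add: zless_nat_eq_int_zless)
    then show "f \<in> (\<lambda>k. 2*k+1) ` {..<K}" using k by auto
  next
    fix f assume "f \<in> (\<lambda>k. 2*k+1) ` {..<K}"
    then obtain k where k: "f = 2*k+1" "k < K" by auto
    then have "real k + 1 \<le> real K" by (simp add: Suc_le_eq[symmetric] del: of_nat_le_iff)
    then have "real f \<le> y" using k fl RK by simp
    then show "f \<in> oddset y" using k by (simp add: oddset_def)
  qed
  moreover have "2*real K - 1 \<le> y"
  proof -
    have "\<And>F::real. F \<le> (y+1)/2 \<Longrightarrow> real K = F \<Longrightarrow> 2*real K - 1 \<le> y" by (simp add: field_simps)
    then show ?thesis using fl(1) RK by blast
  qed
  moreover have "y < 2*real K + 1"
  proof -
    have "\<And>F::real. (y+1)/2 < F + 1 \<Longrightarrow> real K = F \<Longrightarrow> y < 2*real K + 1" by (simp add: field_simps)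
    then show ?thesis using fl(2) RK by blast
  qed
  ultimately show ?thesis using that K1 by blast
qed

lemma sum_oddset:
  assumes "oddset y = (\<lambda>k. 2*k+1) ` {..<K}"
  shows "(\<Sum>f\<in>oddset y. g f) = (\<Sum>k<K. g (2*k+1))"
  unfolding assms by (subst sum.reindex) (auto simp: inj_on_def)

lemma Osum_bounds:
  assumes "y \<ge> 1"
  shows "ln y / 2 + 2/5 \<le> Osum y" "Osum y \<le> ln y / 2 + 1"
proof -
  obtain K where K: "K \<ge> 1" "oddset y = (\<lambda>k. 2*k+1) ` {..<K}" "2*real K - 1 \<le> y" "y < 2*real K + 1"
    using oddset_repr[OF assms] by blast
  have O: "Osum y = (\<Sum>k<K. 1 / (2*real k+1))" unfolding Osum_def sum_oddset[OF K(2)] by (auto intro!: sum.cong)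
  have h: "ln (2*real K+1)/2 + 2/5 \<le> Osum y" "Osum y \<le> ln (2*real K-1)/2 + 1"
    using odd_harm_bounds[OF K(1)] O by auto
  have "ln y \<le> ln (2*real K+1)" using K assms by simp
  moreover have "ln (2*real K-1) \<le> ln y"
  proof -
    have "real K \<ge> 1" using K(1) by simp
    then have "0 < 2*real K-1" by simp
    then show ?thesis using K(3) ln_le_cancel_iff[of "2*real K-1" y] assms by simp
  qed
  ultimately show "ln y / 2 + 2/5 \<le> Osum y" "Osum y \<le> ln y / 2 + 1" using h by linarith+
qed


lemma sq_decomp_unique:
  fixes n d e :: nat
  assumes d: "d > 0" and e: "squarefree e" and n: "n = e * d^2"
  shows "square_part n = d \<and> squarefree_part n = e"
proof -
  have e0: "e \<noteq> 0" using e by (metis not_squarefree_0)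
  have n0: "n \<noteq> 0" using e0 d n by simp
  have mult: "multiplicity p n = multiplicity p e + 2 * multiplicity p d" if p: "prime p" for p
  proof -
    have "multiplicity p n = multiplicity p e + multiplicity p (d^2)"
      using n e0 d p by (simp add: prime_elem_multiplicity_mult_distrib)
    also have "multiplicity p (d^2) = 2 * multiplicity p d"
      using d p by (simp add: prime_elem_multiplicity_power_distrib)
    finally show ?thesis .
  qed
  have le1: "multiplicity p e \<le> 1" if "prime p" for p
    using e e0 that squarefree_factorial_semiring'' by blast
  have "square_part n = d"
  proof (rule multiplicity_eq_nat)
    show "square_part n > 0" using n0 by (metis neq0_conv square_part_0_iff)
    show "d > 0" by fact
    fix p :: nat assume p: "prime p"
    show "multiplicity p (square_part n) = multiplicity p d"
      using mult[OF p] le1[OF p] by (simp add: prime_multiplicity_square_part[OF p])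
  qed
  moreover have "squarefree_part n = e"
  proof (rule multiplicity_eq_nat)
    show "squarefree_part n > 0" using squarefree_part_nonzero[of n] by (metis neq0_conv)
    show "e > 0" using e0 by simp
    fix p :: nat assume p: "prime p"
    show "multiplicity p (squarefree_part n) = multiplicity p e"
      using mult[OF p] le1[OF p] by (simp add: prime_multiplicity_squarefree_part[OF p])
  qed
  ultimately show ?thesis by simp
qed

lemma Osum_identity:
  assumes t: "t \<ge> 0"
  shows "Osum t = (\<Sum>d\<in>oddset (sqrt t). Psum (t / (real d)^2) / (real d)^2)"
proof -
  define D where "D = oddset (sqrt t)"
  define S where "S = Sigma D (\<lambda>d. Qset (t / (real d)^2))"
  have "(\<Sum>d\<in>D. Psum (t / (real d)^2) / (real d)^2)
        = (\<Sum>d\<in>D. \<Sum>e\<in>Qset (t / (real d)^2). 1 / (real e * (real d)^2))"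
    unfolding Psum_def by (simp add: sum_divide_distrib)
  also have "\<dots> = (\<Sum>p\<in>S. 1 / (real (snd p) * (real (fst p))^2))"
    unfolding S_def by (subst sum.Sigma) (auto simp: D_def split_beta)
  also have "\<dots> = (\<Sum>n\<in>oddset t. 1 / real n)"
  proof (rule sum.reindex_bij_witness[where i = "\<lambda>n. (square_part n, squarefree_part n)" and j = "\<lambda>p. snd p * (fst p)^2"])
    fix p assume p: "p \<in> S"
    then obtain d e where pe: "p = (d, e)" and d: "d \<in> D" and e: "e \<in> Qset (t / (real d)^2)"
      by (auto simp: S_def)
    have dodd: "odd d" and dpos: "d > 0" using d by (auto simp: D_def oddset_def intro: odd_pos)
    have eodd: "odd e" and esq: "squarefree e" and ele: "real e \<le> t / (real d)^2" using e by (auto simp: Qset_def)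
    show "(square_part (snd p * (fst p)^2), squarefree_part (snd p * (fst p)^2)) = p"
      using sq_decomp_unique[OF dpos esq refl] pe by simp
    have "real e * (real d)^2 \<le> t" using ele dpos by (simp add: field_simps)
    then show "snd p * (fst p)^2 \<in> oddset t" using pe eodd dodd by (simp add: oddset_def)
    show "1 / real (snd p * (fst p)^2) = 1 / (real (snd p) * (real (fst p))^2)" by simp
  next
    fix n assume n: "n \<in> oddset t"
    then have nodd: "odd n" and nle: "real n \<le> t" by (auto simp: oddset_def)
    have dec: "n = squarefree_part n * (square_part n)^2" by (rule squarefree_decompose)
    show "snd (square_part n, squarefree_part n) * (fst (square_part n, squarefree_part n))^2 = n"
      using dec by simp
    have n0: "n > 0" using nodd by (rule odd_pos)
    have sp0: "square_part n > 0" using n0 by (metis neq0_conv square_part_0_iff)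
    have sfp0: "squarefree_part n > 0" using squarefree_part_nonzero[of n] by (metis neq0_conv)
    have spd: "square_part n dvd n" using dec by (metis dvd_triv_right power2_eq_square dvd_mult_left)
    have sfd: "squarefree_part n dvd n" using dec by (metis dvd_triv_left)
    have spodd: "odd (square_part n)" using spd nodd by (metis dvd_trans)
    have sfodd: "odd (squarefree_part n)" using sfd nodd by (metis dvd_trans)
    have rn: "real n = real (squarefree_part n) * (real (square_part n))^2"
      using dec by (metis of_nat_mult of_nat_power)
    have "(real (square_part n))^2 \<le> real n"
      using rn sfp0 by (simp add: mult_le_cancel_right1 order.trans[rotated])
    then have "(real (square_part n))^2 \<le> t" using nle by linarith
    then have "real (square_part n) \<le> sqrt t" by (simp add: real_le_rsqrt)
    then have 1: "square_part n \<in> D" using spodd by (simp add: D_def oddset_def)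
    have "real (squarefree_part n) \<le> t / (real (square_part n))^2"
      using rn nle sp0 n0 by (subst pos_le_divide_eq) auto
    then have 2: "squarefree_part n \<in> Qset (t / (real (square_part n))^2)"
      using sfodd by (simp add: Qset_def squarefree_squarefree_part)
    show "(square_part n, squarefree_part n) \<in> S" using 1 2 by (simp add: S_def)
  qed
  finally show ?thesis by (simp add: Osum_def D_def)
qed

definition Vsum :: "real \<Rightarrow> real" where "Vsum y = (\<Sum>m\<in>oddset y. real (sqfd m) / real m)"

lemma Vsum_identity: "Vsum y = (\<Sum>f\<in>oddset y. Psum (y / real f) / real f)"
proof -
  define E where "E m = {e. e dvd m \<and> squarefree e}" for m :: nat
  have finE: "finite (E m)" if "m > 0" for m
    by (rule finite_subset[of _ "{..m}"]) (auto simp: E_def that dvd_imp_le)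
  have "Vsum y = (\<Sum>m\<in>oddset y. \<Sum>e\<in>E m. 1 / real m)"
    unfolding Vsum_def sqfd_def E_def by simp
  also have "\<dots> = (\<Sum>p\<in>Sigma (oddset y) E. 1 / real (fst p))"
  proof -
    have fe: "\<forall>m\<in>oddset y. finite (E m)" using finE by (auto simp: oddset_def odd_pos)
    have "(\<Sum>m\<in>oddset y. \<Sum>e\<in>E m. 1 / real m) = sum (\<lambda>(m, e). 1 / real m) (Sigma (oddset y) E)"
      by (rule sum.Sigma[OF finite_oddset fe])
    also have "\<dots> = (\<Sum>p\<in>Sigma (oddset y) E. 1 / real (fst p))" by (simp add: split_beta)
    finally show ?thesis .
  qed
  also have "\<dots> = (\<Sum>p\<in>Sigma (oddset y) (\<lambda>f. Qset (y / real f)). 1 / (real (snd p) * real (fst p)))"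
  proof (rule sum.reindex_bij_witness[where i = "\<lambda>p. (fst p * snd p, snd p)" and j = "\<lambda>p. (fst p div snd p, snd p)"])
    fix a assume a: "a \<in> Sigma (oddset y) E"
    then obtain m e where ae: "a = (m, e)" and m: "odd m" "real m \<le> y" and e: "e dvd m" "squarefree e"
      by (auto simp: oddset_def E_def)
    have m0: "m > 0" using m by (simp add: odd_pos)
    have e0: "e > 0" using e m0 by (metis dvd_0_left_iff neq0_conv)
    obtain f where f: "m = e * f" using e by blast
    have fdiv: "m div e = f" using f e0 by simp
    show "(fst (fst a div snd a, snd a) * snd (fst a div snd a, snd a), snd (fst a div snd a, snd a)) = a"
      using ae f fdiv by simp
    have fodd: "odd f" "odd e" using m f by auto
    have "f \<le> m" using f e0 by simp
    then have "real f \<le> real m" by simp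
    then have fy: "real f \<le> y" using m by linarith
    have f0: "f > 0" using fodd by (simp add: odd_pos)
    have "real e * real f \<le> y" using f m by (metis of_nat_mult)
    then have "real e \<le> y / real f" using f0 by (subst pos_le_divide_eq) auto
    then show "(fst a div snd a, snd a) \<in> Sigma (oddset y) (\<lambda>f. Qset (y / real f))"
      using ae fdiv fodd fy e by (simp add: oddset_def Qset_def)
    show "1 / (real (snd (fst a div snd a, snd a)) * real (fst (fst a div snd a, snd a))) = 1 / real (fst a)"
      using ae fdiv f by simp
  next
    fix b assume b: "b \<in> Sigma (oddset y) (\<lambda>f. Qset (y / real f))"
    then obtain f e where be: "b = (f, e)" and f: "odd f" "real f \<le> y" and e: "odd e" "squarefree e" "real e \<le> y / real f"
      by (auto simp: oddset_def Qset_def)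
    have f0: "f > 0" using f by (simp add: odd_pos)
    have e0: "e > 0" using e by (simp add: odd_pos)
    show "(fst (fst b * snd b, snd b) div snd (fst b * snd b, snd b), snd (fst b * snd b, snd b)) = b"
      using be e0 by simp
    have "real e * real f \<le> y" using e(3) f0 by (subst (asm) pos_le_divide_eq) auto
    then have "real (f * e) \<le> y" by (simp add: mult.commute)
    then show "(fst b * snd b, snd b) \<in> Sigma (oddset y) E"
      using be f e by (simp add: oddset_def E_def)
  qed
  also have "\<dots> = (\<Sum>f\<in>oddset y. \<Sum>e\<in>Qset (y / real f). 1 / (real e * real f))"
    by (subst sum.Sigma) (auto simp: split_beta)
  also have "\<dots> = (\<Sum>f\<in>oddset y. Psum (y / real f) / real f)"
    unfolding Psum_def by (simp add: sum_divide_distrib)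
  finally show ?thesis .
qed


lemma KI:
  fixes K :: nat
  assumes "K \<ge> 1"
  shows "ln (2*real K+1) / (2*real K) \<le> (ln (2*real K-1)+1)/(2*real K-1)"
proof -
  have K1: "real K \<ge> 1" using assms by simp
  have a0: "2*real K - 1 \<ge> 1" using K1 by simp
  have "ln (2*real K+1) - ln (2*real K-1) = ln (1 + 2/(2*real K-1))"
    using a0 by (subst ln_diff_eq) auto
  also have "\<dots> \<le> 2/(2*real K-1)" using a0 by (intro ln_add_one_self_le_self) auto
  finally have l: "ln (2*real K+1) \<le> ln (2*real K-1) + 2/(2*real K-1)" by simp
  have lg0: "ln (2*real K-1) \<ge> 0" using a0 by simp
  have "ln (2*real K+1) / (2*real K) \<le> (ln (2*real K-1) + 2/(2*real K-1)) / (2*real K)"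
    using l K1 by (intro divide_right_mono) auto
  also have "\<dots> = ln (2*real K-1) / (2*real K) + (1/real K) / (2*real K-1)"
    using K1 by (simp add: field_simps)
  also have "ln (2*real K-1) / (2*real K) \<le> ln (2*real K-1) / (2*real K-1)"
    using lg0 a0 by (intro divide_left_mono) auto
  also have "(1/real K) / (2*real K-1) \<le> 1 / (2*real K-1)"
    using K1 a0 by (intro divide_right_mono) auto
  finally show ?thesis by (simp add: add_divide_distrib)
qed

lemma pi_sq_bounds: "98596/10000 \<le> pi^2" "pi^2 \<le> 99225/10000"
proof -
  have p: "314/100 \<le> pi" "pi \<le> 315/100" using pi_bounds by simp_all
  have "(314/100) * (314/100) \<le> pi * pi" using p by (intro mult_mono) auto
  then show "98596/10000 \<le> pi^2" by (simp add: power2_eq_square)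
  have "pi * pi \<le> (315/100) * (315/100)" using p by (intro mult_mono) auto
  then show "pi^2 \<le> 99225/10000" by (simp add: power2_eq_square)
qed

lemma inv_pi_sq_bounds: "403/1000 \<le> 4/pi^2" "4/pi^2 \<le> 406/1000"
proof -
  have "4/(99225/10000) \<le> 4/pi^2" using pi_sq_bounds by (intro divide_left_mono) auto
  moreover have "(403/1000::real) \<le> 4/(99225/10000)" by simp
  ultimately show "403/1000 \<le> 4/pi^2" by (meson order.trans)
  have "4/pi^2 \<le> 4/(98596/10000)" using pi_sq_bounds by (intro divide_left_mono) auto
  moreover have "4/(98596/10000) \<le> (406/1000::real)" by simp
  ultimately show "4/pi^2 \<le> 406/1000" by (meson order.trans)
qed

lemma D2_const: "(1 + 4/pi^2) * (pi^2/8 - 1) \<le> 2/5"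
proof -
  have "(1 + 4/pi^2) * (pi^2/8 - 1) = pi^2/8 - 1/2 - 4/pi^2"
    by (simp add: field_simps)
  also have "\<dots> \<le> 2/5" using pi_sq_bounds inv_pi_sq_bounds by linarith
  finally show ?thesis .
qed

lemma sum_split0:
  fixes f :: "nat \<Rightarrow> real"
  assumes "K \<ge> 1"
  shows "(\<Sum>k<K. f k) = f 0 + (\<Sum>k\<in>{1..<K}. f k)"
proof -
  have "(\<Sum>k<K. f k) = (\<Sum>k\<in>{0..<K}. f k)" by (simp add: atLeast0LessThan)
  also have "\<dots> = f 0 + (\<Sum>k\<in>{Suc 0..<K}. f k)" using assms by (subst sum.atLeast_Suc_lessThan) auto
  finally show ?thesis by simp
qed

lemma floor_div_less:
  fixes t u :: real
  assumes "t \<ge> 9" "u \<ge> 0" "u \<le> t / 9"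
  shows "nat \<lfloor>u\<rfloor> < nat \<lfloor>t\<rfloor>"
proof -
  have "u \<le> t - 1" using assms by linarith
  then have "\<lfloor>u\<rfloor> < \<lfloor>t\<rfloor>" by linarith
  moreover have "\<lfloor>u\<rfloor> \<ge> 0" using assms by simp
  ultimately show ?thesis by (metis nat_less_eq_zless)
qed

lemma Psum_bounds_aux:
  "\<forall>t. 1 \<le> t \<longrightarrow> nat \<lfloor>t\<rfloor> = n \<longrightarrow>
     4/pi^2 * ln t \<le> Psum t \<and> Psum t \<le> 4/pi^2 * ln t + (1 + 4/pi^2)"
proof (induction n rule: less_induct)
  case (less n)
  show ?case
  proof (intro allI impI)
    fix t :: real assume t1: "1 \<le> t" and tn: "nat \<lfloor>t\<rfloor> = n"
    define A where "A = 4/pi^2"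
    define D2 where "D2 = 1 + A"
    define L where "L = ln t"
    define c where "c = pi^2/8"
    have A0: "A > 0" by (simp add: A_def)
    have Ac: "A * c = 1/2" by (simp add: A_def c_def)
    have L0: "L \<ge> 0" using t1 by (simp add: L_def)
    have x1: "sqrt t \<ge> 1" using t1 by simp
    obtain K where K: "K \<ge> 1" "oddset (sqrt t) = (\<lambda>k. 2*k+1) ` {..<K}" "2*real K - 1 \<le> sqrt t" "sqrt t < 2*real K + 1"
      using oddset_repr[OF x1] by blast
    define d where "d k = 2*real k + 1" for k :: nat
    have d1: "d k \<ge> 1" for k by (simp add: d_def)
    have Oid: "Osum t = (\<Sum>k<K. Psum (t / (d k)^2) / (d k)^2)"
    proof -
      have "Osum t = (\<Sum>f\<in>oddset (sqrt t). Psum (t / (real f)^2) / (real f)^2)"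
        using Osum_identity[of t] t1 by simp
      also have "\<dots> = (\<Sum>k<K. Psum (t / (real (2*k+1))^2) / (real (2*k+1))^2)"
        by (rule sum_oddset[OF K(2)])
      also have "\<dots> = (\<Sum>k<K. Psum (t / (d k)^2) / (d k)^2)"
        by (intro sum.cong) (auto simp: d_def add.commute)
      finally show ?thesis .
    qed
    define R where "R = (\<Sum>k\<in>{1..<K}. Psum (t / (d k)^2) / (d k)^2)"
    have OPR: "Osum t = Psum t + R"
      using Oid sum_split0[OF K(1), of "\<lambda>k. Psum (t / (d k)^2) / (d k)^2"] by (simp add: R_def d_def)
    define S1 where "S1 = (\<Sum>k\<in>{1..<K}. 1 / (d k)^2)"
    define S2 where "S2 = (\<Sum>k\<in>{1..<K}. ln (d k) / (d k)^2)"
    have term_bounds: "A*L*(1/(d k)^2) - 2*A*(ln (d k)/(d k)^2) \<le> Psum (t / (d k)^2) / (d k)^2 \<and>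
        Psum (t / (d k)^2) / (d k)^2 \<le> (A*L + D2)*(1/(d k)^2) - 2*A*(ln (d k)/(d k)^2)"
      if k: "k \<in> {1..<K}" for k
    proof -
      have dk3: "d k \<ge> 3" using k by (simp add: d_def)
      have dkx: "d k \<le> sqrt t" using k K(3) by (simp add: d_def)
      have "(d k)^2 \<le> (sqrt t)^2" using dkx dk3 by (intro power_mono) auto
      then have dk2: "(d k)^2 \<le> t" using t1 by simp
      define u where "u = t / (d k)^2"
      have dpos: "(d k)^2 > 0" using dk3 by simp
      have u1: "u \<ge> 1" using dk2 dpos by (simp add: u_def)
      have "3^2 \<le> (d k)^2" using dk3 by (intro power_mono) auto
      then have "9 \<le> (d k)^2" by simp
      then have t9: "t \<ge> 9" using dk2 by linarith
      have "u \<le> t/9" unfolding u_def using \<open>9 \<le> (d k)^2\<close> t1 by (intro divide_left_mono) auto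
      then have lt: "nat \<lfloor>u\<rfloor> < n" using floor_div_less[OF t9, of u] u1 tn by simp
      have IH: "4/pi^2 * ln u \<le> Psum u \<and> Psum u \<le> 4/pi^2 * ln u + (1 + 4/pi^2)"
        using less.IH[OF lt] u1 by blast
      have lnu: "ln u = L - 2 * ln (d k)"
        using dk3 t1 by (simp add: u_def L_def ln_div ln_realpow)
      have lo: "A*(L - 2*ln (d k)) \<le> Psum u" and hi: "Psum u \<le> A*(L - 2*ln (d k)) + D2"
        using IH lnu by (simp_all add: A_def D2_def)
      have f1: "A*(L - 2*ln (d k)) / (d k)^2 \<le> Psum (t / (d k)^2) / (d k)^2"
        using lo dpos unfolding u_def by (intro divide_right_mono) auto
      have f2: "Psum (t / (d k)^2) / (d k)^2 \<le> (A*(L - 2*ln (d k)) + D2) / (d k)^2"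
        using hi dpos unfolding u_def by (intro divide_right_mono) auto
      have dk0: "d k \<noteq> 0" using dk3 by simp
      have eqa: "A*L*(1/(d k)^2) - 2*A*(ln (d k)/(d k)^2) = A*(L - 2*ln (d k)) / (d k)^2"
        using dk0 by (simp add: field_simps)
      have eqb: "(A*L + D2)*(1/(d k)^2) - 2*A*(ln (d k)/(d k)^2) = (A*(L - 2*ln (d k)) + D2) / (d k)^2"
        using dk0 by (simp add: field_simps)
      show ?thesis unfolding eqa eqb using f1 f2 by blast
    qed
    have Rlo: "A*L*S1 - 2*A*S2 \<le> R"
    proof -
      have "A*L*S1 - 2*A*S2 = (\<Sum>k\<in>{1..<K}. A*L*(1/(d k)^2) - 2*A*(ln (d k)/(d k)^2))"
        by (simp add: S1_def S2_def sum_subtractf sum_distrib_left)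
      also have "\<dots> \<le> R" unfolding R_def using term_bounds by (intro sum_mono) blast
      finally show ?thesis .
    qed
    have Rhi: "R \<le> (A*L + D2)*S1 - 2*A*S2"
    proof -
      have "R \<le> (\<Sum>k\<in>{1..<K}. (A*L + D2)*(1/(d k)^2) - 2*A*(ln (d k)/(d k)^2))"
        unfolding R_def using term_bounds by (intro sum_mono) blast
      also have "\<dots> = (A*L + D2)*S1 - 2*A*S2"
        by (simp add: S1_def S2_def sum_subtractf sum_distrib_left)
      finally show ?thesis .
    qed
    have S1eq: "S1 = (\<Sum>k<K. 1 / (2*real k+1)^2) - 1"
      using sum_split0[OF K(1), of "\<lambda>k. 1 / (2*real k+1)^2"] by (simp add: S1_def d_def)
    have S1lo: "c - 1/(4*K) - 1 \<le> S1" using S1eq odd_sq_partial_ge[OF K(1)] by (simp add: c_def)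
    have S1hi: "S1 \<le> c - 1" using S1eq odd_sq_partial_le[of K] by (simp add: c_def)
    have S2lo: "0 \<le> S2" unfolding S2_def by (intro sum_nonneg) (auto simp: d_def)
    have S2hi: "S2 \<le> 1/2 - G (2*real K - 1)" using B_bound[OF K(1)] by (simp add: S2_def d_def)
    have Olo: "L/2 + 2/5 \<le> Osum t" and Ohi: "Osum t \<le> L/2 + 1" using Osum_bounds[OF t1] by (simp_all add: L_def)
    have K1: "real K \<ge> 1" using K(1) by simp
    have LK: "L \<le> 2 * ln (2*real K+1)"
    proof -
      have "t = (sqrt t)^2" using t1 by simp
      also have "\<dots> \<le> (2*real K+1)^2" using K(4) x1 by (intro power_mono) auto
      finally have "ln t \<le> ln ((2*real K+1)^2)" using t1 by simp
      then show ?thesis by (simp add: L_def ln_realpow)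
    qed
    have KIG: "L/(4*real K) \<le> 2 * G (2*real K - 1)"
    proof -
      have "L/(4*real K) \<le> 2 * ln (2*real K+1) / (4*real K)" using LK K1 by (intro divide_right_mono) auto
      also have "\<dots> = ln (2*real K+1) / (2*real K)" by simp
      also have "\<dots> \<le> (ln (2*real K-1)+1)/(2*real K-1)" by (rule KI[OF K(1)])
      also have "\<dots> = 2 * G (2*real K - 1)"
      proof -
        have "2*real K - 1 \<noteq> 0" using K1 by simp
        then show ?thesis unfolding G_def by (simp add: field_simps)
      qed
      finally show ?thesis .
    qed
    have upper: "Psum t \<le> A*L + D2"
    proof -
      have m1: "A*L*(c - 1/(4*K) - 1) \<le> A*L*S1" using S1lo A0 L0 by (intro mult_left_mono) auto
      have e1: "A*L*(c - 1/(4*K) - 1) = L/2 - A*L - A*(L/(4*K))"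
        using Ac by (simp add: algebra_simps)
      have m2: "A*(L/(4*K)) \<le> A*(2 * G (2*real K - 1))" using KIG A0 by (intro mult_left_mono) auto
      have m3: "2*A*S2 \<le> 2*A*(1/2 - G (2*real K - 1))" using S2hi A0 by (intro mult_left_mono) auto
      have e2: "A*(2 * G (2*real K - 1)) + 2*A*(1/2 - G (2*real K - 1)) = A"
        by (simp add: algebra_simps)
      have "Psum t = Osum t - R" using OPR by simp
      then show ?thesis using Ohi Rlo m1 e1 m2 m3 e2 unfolding D2_def by linarith
    qed
    have lower: "A*L \<le> Psum t"
    proof -
      have pos: "A*L + D2 \<ge> 0" using A0 L0 by (simp add: D2_def)
      have m1: "(A*L + D2)*S1 \<le> (A*L + D2)*(c - 1)" using S1hi pos by (intro mult_left_mono) auto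
      have m2: "0 \<le> 2*A*S2" using A0 S2lo by simp
      have e1: "(A*L + D2)*(c - 1) = L/2 - A*L + D2*(c-1)" using Ac by (simp add: algebra_simps)
      have dc: "D2*(c-1) \<le> 2/5" using D2_const by (simp add: D2_def A_def c_def)
      have "Psum t = Osum t - R" using OPR by simp
      then show ?thesis using Olo Rhi m1 m2 e1 dc by linarith
    qed
    show "4/pi^2 * ln t \<le> Psum t \<and> Psum t \<le> 4/pi^2 * ln t + (1 + 4/pi^2)"
      using upper lower by (simp add: A_def D2_def L_def)
  qed
qed

lemma Psum_bounds:
  assumes "t \<ge> 1"
  shows "4/pi^2 * ln t \<le> Psum t" "Psum t \<le> 4/pi^2 * ln t + (1 + 4/pi^2)"
  using Psum_bounds_aux[of "nat \<lfloor>t\<rfloor>"] assms by blast+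


lemma oddset_empty: "y < 1 \<Longrightarrow> oddset y = {}"
  by (auto simp: oddset_def elim!: oddE)

lemma Vsum_zero: "y < 1 \<Longrightarrow> Vsum y = 0"
  by (simp add: Vsum_def oddset_empty)

lemma Vsum_mono:
  assumes "y \<le> z"
  shows "Vsum y \<le> Vsum z"
  unfolding Vsum_def
proof (rule sum_mono2)
  show "finite (oddset z)" by simp
  show "oddset y \<subseteq> oddset z" using assms by (auto simp: oddset_def)
  show "\<And>b. b \<in> oddset z - oddset y \<Longrightarrow> 0 \<le> real (sqfd b) / real b" by simp
qed

lemma Vsum_nonneg: "Vsum y \<ge> 0"
  unfolding Vsum_def by (intro sum_nonneg) simp

lemma Vsum_bound:
  assumes y1: "y \<ge> 1"
  shows "Vsum y \<le> 1/pi^2 * (ln y)^2 + (1/2 + 6/pi^2) * ln y + (1 + 136/25 * (1/pi^2))"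
proof -
  define A where "A = 4/pi^2"
  define D2 where "D2 = 1 + A"
  define L where "L = ln y"
  have A0: "A > 0" by (simp add: A_def)
  have L0: "L \<ge> 0" using y1 by (simp add: L_def)
  obtain K where K: "K \<ge> 1" "oddset y = (\<lambda>k. 2*k+1) ` {..<K}" "2*real K - 1 \<le> y" "y < 2*real K + 1"
    using oddset_repr[OF y1] by blast
  have tb: "Psum (y / real f) / real f \<le> (A*L + D2) * (1 / real f) - A * (ln (real f) / real f)"
    if f: "f \<in> oddset y" for f
  proof -
    have fo: "odd f" and fy: "real f \<le> y" using f by (auto simp: oddset_def)
    have f0: "real f \<ge> 1" using fo by (simp add: odd_pos Suc_le_eq)
    have u1: "y / real f \<ge> 1" using fy f0 by simp
    have "Psum (y / real f) \<le> A * ln (y / real f) + D2" using Psum_bounds(2)[OF u1] by (simp add: A_def D2_def)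
    also have "ln (y / real f) = L - ln (real f)" using f0 y1 by (simp add: L_def ln_div)
    finally have "Psum (y / real f) \<le> A * (L - ln (real f)) + D2" .
    then have "Psum (y / real f) / real f \<le> (A * (L - ln (real f)) + D2) / real f"
      using f0 by (intro divide_right_mono) auto
    also have "\<dots> = (A*L + D2) * (1 / real f) - A * (ln (real f) / real f)"
      using f0 by (simp add: field_simps)
    finally show ?thesis .
  qed
  have "Vsum y = (\<Sum>f\<in>oddset y. Psum (y / real f) / real f)" by (rule Vsum_identity)
  also have "\<dots> \<le> (\<Sum>f\<in>oddset y. (A*L + D2) * (1 / real f) - A * (ln (real f) / real f))"
    using tb by (intro sum_mono) blast
  also have "\<dots> = (A*L + D2) * Osum y - A * (\<Sum>f\<in>oddset y. ln (real f) / real f)"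
    by (simp add: Osum_def sum_subtractf sum_distrib_left)
  finally have V1: "Vsum y \<le> (A*L + D2) * Osum y - A * (\<Sum>f\<in>oddset y. ln (real f) / real f)" .
  have Lam: "(L^2 - 36/25)/4 \<le> (\<Sum>f\<in>oddset y. ln (real f) / real f)"
  proof -
    have "(\<Sum>f\<in>oddset y. ln (real f) / real f) = (\<Sum>k<K. ln (real (2*k+1)) / real (2*k+1))"
      by (rule sum_oddset[OF K(2)])
    also have "\<dots> = (\<Sum>k<K. ln (2*real k+1) / (2*real k+1))" by (intro sum.cong) (auto simp: add.commute)
    finally have e: "(\<Sum>f\<in>oddset y. ln (real f) / real f) = (\<Sum>k<K. ln (2*real k+1) / (2*real k+1))" .
    have "L \<le> ln (2*real K+1)" using K(4) y1 by (simp add: L_def)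
    then have "L^2 \<le> (ln (2*real K+1))^2" using L0 by (intro power_mono) auto
    moreover have "(ln 3)^2 \<le> (6/5::real)^2" using ln3_le by (intro power_mono) auto
    ultimately have "(L^2 - 36/25)/4 \<le> ((ln (2*real K+1))^2 - (ln 3)^2)/4" by (simp add: power_divide)
    also have "\<dots> \<le> (\<Sum>k<K. ln (2*real k+1) / (2*real k+1))" by (rule Lambda_bound[OF K(1)])
    finally show ?thesis using e by simp
  qed
  have Ohi: "Osum y \<le> L/2 + 1" using Osum_bounds(2)[OF y1] by (simp add: L_def)
  have pos: "A*L + D2 \<ge> 0" using A0 L0 by (simp add: D2_def)
  have m1: "(A*L + D2) * Osum y \<le> (A*L + D2) * (L/2 + 1)" using Ohi pos by (intro mult_left_mono) auto
  have m2: "A * ((L^2 - 36/25)/4) \<le> A * (\<Sum>f\<in>oddset y. ln (real f) / real f)" using Lam A0 by (intro mult_left_mono) auto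
  have e1: "(A*L + D2) * (L/2 + 1) - A * ((L^2 - 36/25)/4) = 1/pi^2 * L^2 + (1/2 + 6/pi^2) * L + (1 + 136/25 * (1/pi^2))"
    by (simp add: A_def D2_def field_simps power2_eq_square)
  show ?thesis using V1 m1 m2 e1 unfolding L_def by linarith
qed


definition Dset :: "real \<Rightarrow> nat set" where "Dset y = {d. 0 < d \<and> real d \<le> y}"

lemma finite_Dset [simp]: "finite (Dset y)"
  by (rule finite_subset[of _ "{..nat \<lfloor>y\<rfloor>}"]) (auto simp: Dset_def intro: le_nat_floor)

lemma Dset_empty: "y < 1 \<Longrightarrow> Dset y = {}"
  by (auto simp: Dset_def)

lemma sumD:
  fixes g :: "nat \<Rightarrow> real"
  shows "(\<Sum>d\<in>Dset z. g d) = (\<Sum>d\<in>oddset z. g d) + (\<Sum>j\<in>Dset (z/2). g (2*j))"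
proof -
  have split: "Dset z = oddset z \<union> (\<lambda>j. 2*j) ` Dset (z/2)"
  proof (intro set_eqI iffI)
    fix d assume d: "d \<in> Dset z"
    show "d \<in> oddset z \<union> (\<lambda>j. 2*j) ` Dset (z/2)"
    proof (cases "odd d")
      case True then show ?thesis using d by (auto simp: Dset_def oddset_def)
    next
      case False
      then obtain j where j: "d = 2*j" by blast
      then have "j \<in> Dset (z/2)" using d by (auto simp: Dset_def)
      then show ?thesis using j by blast
    qed
  next
    fix d assume "d \<in> oddset z \<union> (\<lambda>j. 2*j) ` Dset (z/2)"
    then show "d \<in> Dset z" by (auto simp: Dset_def oddset_def odd_pos)
  qed
  have disj: "oddset z \<inter> (\<lambda>j. 2*j) ` Dset (z/2) = {}" by (auto simp: oddset_def)
  have "(\<Sum>d\<in>Dset z. g d) = (\<Sum>d\<in>oddset z. g d) + (\<Sum>d\<in>(\<lambda>j. 2*j) ` Dset (z/2). g d)"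
    unfolding split by (rule sum.union_disjoint) (auto simp: disj)
  also have "(\<Sum>d\<in>(\<lambda>j. 2*j) ` Dset (z/2). g d) = (\<Sum>j\<in>Dset (z/2). g (2*j))"
    by (subst sum.reindex) (auto simp: inj_on_def)
  finally show ?thesis .
qed

definition Ssum :: "nat \<Rightarrow> real \<Rightarrow> real" where
  "Ssum s y = (\<Sum>d\<in>Dset y. real (rho (4^s) d) / real d)"

definition Wsum :: "real \<Rightarrow> real" where
  "Wsum y = (\<Sum>j\<in>Dset y. real (w j) / real j)"

lemma Wsum_rec: "Wsum y = Vsum y + Wsum (y/2) / 2"
proof -
  have "Wsum y = (\<Sum>d\<in>oddset y. real (w d) / real d) + (\<Sum>j\<in>Dset (y/2). real (w (2*j)) / real (2*j))"
    unfolding Wsum_def by (rule sumD)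
  also have "(\<Sum>d\<in>oddset y. real (w d) / real d) = Vsum y"
    unfolding Vsum_def by (intro sum.cong) (auto simp: oddset_def w_odd)
  also have "(\<Sum>j\<in>Dset (y/2). real (w (2*j)) / real (2*j)) = Wsum (y/2) / 2"
    unfolding Wsum_def sum_divide_distrib by (intro sum.cong) (auto simp: Dset_def w_double)
  finally show ?thesis .
qed

lemma Wsum_le_aux: "\<forall>y. nat \<lfloor>y\<rfloor> = n \<longrightarrow> Wsum y \<le> 2 * Vsum y"
proof (induction n rule: less_induct)
  case (less n)
  show ?case
  proof (intro allI impI)
    fix y :: real assume yn: "nat \<lfloor>y\<rfloor> = n"
    show "Wsum y \<le> 2 * Vsum y"
    proof (cases "y < 1")
      case True
      then show ?thesis using Vsum_nonneg[of y] by (simp add: Wsum_def Dset_empty)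
    next
      case False
      then have y1: "y \<ge> 1" by simp
      have f1: "real_of_int \<lfloor>y\<rfloor> \<ge> 1" using y1 by simp
      have f2: "y < real_of_int \<lfloor>y\<rfloor> + 1" by linarith
      have "\<And>F. F \<ge> 1 \<Longrightarrow> y < F + 1 \<Longrightarrow> y/2 < F" by (simp add: field_simps)
      then have "y/2 < of_int \<lfloor>y\<rfloor>" using f1 f2 by blast
      then have "\<lfloor>y/2\<rfloor> < \<lfloor>y\<rfloor>" by linarith
      moreover have "\<lfloor>y/2\<rfloor> \<ge> 0" using y1 by simp
      ultimately have lt: "nat \<lfloor>y/2\<rfloor> < n" using yn by (metis nat_less_eq_zless)
      have "Wsum (y/2) \<le> 2 * Vsum (y/2)" using less.IH[OF lt] by blast
      moreover have "Vsum (y/2) \<le> Vsum y" using y1 by (intro Vsum_mono) simp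
      ultimately show ?thesis using Wsum_rec[of y] by linarith
    qed
  qed
qed

lemma Wsum_le: "Wsum y \<le> 2 * Vsum y"
  using Wsum_le_aux by blast

lemma Ssum_nonneg: "Ssum s y \<ge> 0"
  unfolding Ssum_def by (intro sum_nonneg) simp

lemma Ssum_zero: "y < 1 \<Longrightarrow> Ssum s y = 0"
  by (simp add: Ssum_def Dset_empty)

lemma sumD2:
  fixes g :: "nat \<Rightarrow> real"
  shows "(\<Sum>d\<in>Dset z. g d) = (\<Sum>d\<in>oddset z. g d) + (\<Sum>j\<in>oddset (z/2). g (2*j)) + (\<Sum>i\<in>Dset (z/4). g (4*i))"
proof -
  have "(\<Sum>j\<in>Dset (z/2). g (2*j)) = (\<Sum>j\<in>oddset (z/2). g (2*j)) + (\<Sum>i\<in>Dset (z/2/2). g (2*(2*i)))"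
    by (rule sumD)
  also have "z/2/2 = z/4" by simp
  finally show ?thesis using sumD[of g z] by (simp add: mult.assoc)
qed

lemma Ssum_step: "Ssum (Suc s) y \<le> Vsum y + Vsum (y/2) / 2 + Ssum s (y/4) / 2"
proof -
  have e: "Ssum (Suc s) y = (\<Sum>d\<in>oddset y. real (rho (4^Suc s) d) / real d)
      + (\<Sum>j\<in>oddset (y/2). real (rho (4^Suc s) (2*j)) / real (2*j))
      + (\<Sum>i\<in>Dset (y/4). real (rho (4^Suc s) (4*i)) / real (4*i))"
    unfolding Ssum_def by (rule sumD2)
  have 1: "(\<Sum>d\<in>oddset y. real (rho (4^Suc s) d) / real d) \<le> Vsum y"
    unfolding Vsum_def by (intro sum_mono divide_right_mono) (auto simp: oddset_def rho_odd_pow4 simp del: power_Suc)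
  have 2: "(\<Sum>j\<in>oddset (y/2). real (rho (4^Suc s) (2*j)) / real (2*j)) \<le> Vsum (y/2) / 2"
  proof -
    have "(\<Sum>j\<in>oddset (y/2). real (rho (4^Suc s) (2*j)) / real (2*j)) \<le> (\<Sum>j\<in>oddset (y/2). real (sqfd j) / real j / 2)"
    proof (intro sum_mono)
      fix j assume "j \<in> oddset (y/2)"
      then have jo: "odd j" by (simp add: oddset_def)
      have "real (rho (4^Suc s) (2*j)) \<le> real (sqfd j)" using rho_2odd_pow4[OF jo, of "Suc s"] by (simp del: power_Suc)
      then have "real (rho (4^Suc s) (2*j)) / real (2*j) \<le> real (sqfd j) / real (2*j)"
        by (intro divide_right_mono) auto
      also have "\<dots> = real (sqfd j) / real j / 2" by simp
      finally show "real (rho (4^Suc s) (2*j)) / real (2*j) \<le> real (sqfd j) / real j / 2" .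
    qed
    also have "\<dots> = Vsum (y/2) / 2" by (simp add: Vsum_def sum_divide_distrib)
    finally show ?thesis .
  qed
  have 3: "(\<Sum>i\<in>Dset (y/4). real (rho (4^Suc s) (4*i)) / real (4*i)) \<le> Ssum s (y/4) / 2"
  proof -
    have "(\<Sum>i\<in>Dset (y/4). real (rho (4^Suc s) (4*i)) / real (4*i)) \<le> (\<Sum>i\<in>Dset (y/4). real (rho (4^s) i) / real i / 2)"
    proof (intro sum_mono)
      fix i assume "i \<in> Dset (y/4)"
      then have i0: "i > 0" by (simp add: Dset_def)
      have "real (rho (4^Suc s) (4*i)) \<le> 2 * real (rho (4^s) i)" using rho_4m_pow4[OF i0, of s] by simp
      then have "real (rho (4^Suc s) (4*i)) / real (4*i) \<le> 2 * real (rho (4^s) i) / real (4*i)"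
        using i0 by (intro divide_right_mono) auto
      also have "\<dots> = real (rho (4^s) i) / real i / 2" using i0 by simp
      finally show "real (rho (4^Suc s) (4*i)) / real (4*i) \<le> real (rho (4^s) i) / real i / 2" .
    qed
    also have "\<dots> = Ssum s (y/4) / 2" by (simp add: Ssum_def sum_divide_distrib)
    finally show ?thesis .
  qed
  show ?thesis using e 1 2 3 by linarith
qed

lemma Ssum_base: "Ssum 0 y \<le> Vsum y + Vsum (y/2) / 2 + Vsum (y/4) / 2 + Vsum (y/8)"
proof -
  have e: "Ssum 0 y = (\<Sum>d\<in>oddset y. real (rho 1 d) / real d)
      + (\<Sum>j\<in>oddset (y/2). real (rho 1 (2*j)) / real (2*j))
      + (\<Sum>i\<in>Dset (y/4). real (rho 1 (4*i)) / real (4*i))"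
    unfolding Ssum_def using sumD2[of "\<lambda>d. real (rho 1 d) / real d" y] by simp
  have 1: "(\<Sum>d\<in>oddset y. real (rho 1 d) / real d) \<le> Vsum y"
    unfolding Vsum_def using rho_odd_pow4[of _ 0]
    by (intro sum_mono divide_right_mono) (auto simp: oddset_def)
  have 2: "(\<Sum>j\<in>oddset (y/2). real (rho 1 (2*j)) / real (2*j)) \<le> Vsum (y/2) / 2"
  proof -
    have "(\<Sum>j\<in>oddset (y/2). real (rho 1 (2*j)) / real (2*j)) \<le> (\<Sum>j\<in>oddset (y/2). real (sqfd j) / real j / 2)"
    proof (intro sum_mono)
      fix j assume "j \<in> oddset (y/2)"
      then have jo: "odd j" by (simp add: oddset_def)
      have "real (rho 1 (2*j)) \<le> real (sqfd j)" using rho_2odd_pow4[OF jo, of 0] by simp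
      then have "real (rho 1 (2*j)) / real (2*j) \<le> real (sqfd j) / real (2*j)"
        by (intro divide_right_mono) auto
      also have "\<dots> = real (sqfd j) / real j / 2" by simp
      finally show "real (rho 1 (2*j)) / real (2*j) \<le> real (sqfd j) / real j / 2" .
    qed
    also have "\<dots> = Vsum (y/2) / 2" by (simp add: Vsum_def sum_divide_distrib)
    finally show ?thesis .
  qed
  have e3: "(\<Sum>i\<in>Dset (y/4). real (rho 1 (4*i)) / real (4*i)) =
      (\<Sum>i\<in>oddset (y/4). real (rho 1 (4*i)) / real (4*i)) + (\<Sum>j\<in>Dset (y/8). real (rho 1 (8*j)) / real (8*j))"
    using sumD[of "\<lambda>i. real (rho 1 (4*i)) / real (4*i)" "y/4"] by simp
  have 3: "(\<Sum>i\<in>oddset (y/4). real (rho 1 (4*i)) / real (4*i)) \<le> Vsum (y/4) / 2"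
  proof -
    have "(\<Sum>i\<in>oddset (y/4). real (rho 1 (4*i)) / real (4*i)) \<le> (\<Sum>i\<in>oddset (y/4). real (sqfd i) / real i / 2)"
    proof (intro sum_mono)
      fix i assume "i \<in> oddset (y/4)"
      then have io: "odd i" by (simp add: oddset_def)
      have "real (rho 1 (4*i)) \<le> 2 * real (sqfd i)" using rho_one_4odd[OF io] by simp
      then have "real (rho 1 (4*i)) / real (4*i) \<le> 2 * real (sqfd i) / real (4*i)"
        by (intro divide_right_mono) auto
      also have "\<dots> = real (sqfd i) / real i / 2" by simp
      finally show "real (rho 1 (4*i)) / real (4*i) \<le> real (sqfd i) / real i / 2" .
    qed
    also have "\<dots> = Vsum (y/4) / 2" by (simp add: Vsum_def sum_divide_distrib)
    finally show ?thesis .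
  qed
  have 4: "(\<Sum>j\<in>Dset (y/8). real (rho 1 (8*j)) / real (8*j)) \<le> Vsum (y/8)"
  proof -
    have "(\<Sum>j\<in>Dset (y/8). real (rho 1 (8*j)) / real (8*j)) \<le> (\<Sum>j\<in>Dset (y/8). real (w j) / real j / 2)"
    proof (intro sum_mono)
      fix j assume "j \<in> Dset (y/8)"
      then have j0: "j > 0" by (simp add: Dset_def)
      have "real (rho 1 (8*j)) \<le> 4 * real (w j)" using rho_one_8k[OF j0] by simp
      then have "real (rho 1 (8*j)) / real (8*j) \<le> 4 * real (w j) / real (8*j)"
        by (intro divide_right_mono) auto
      also have "\<dots> = real (w j) / real j / 2" by simp
      finally show "real (rho 1 (8*j)) / real (8*j) \<le> real (w j) / real j / 2" .
    qed
    also have "\<dots> = Wsum (y/8) / 2" by (simp add: Wsum_def sum_divide_distrib)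
    also have "\<dots> \<le> Vsum (y/8)" using Wsum_le[of "y/8"] by simp
    finally show ?thesis .
  qed
  show ?thesis using e 1 2 e3 3 4 by linarith
qed


definition Ua :: "real \<Rightarrow> real \<Rightarrow> real" where "Ua a M = a*M^2 + (1/2 + 6*a)*M + (1 + 136/25*a)"
definition Fa :: "real \<Rightarrow> real \<Rightarrow> real" where "Fa a M = 3*a*M^2 + 1387/500*M + 1083/500"

lemma combo:
  fixes c0 c1 c2 L :: real
  assumes "0 \<le> c1" "0 \<le> L" "0 < c0" "0 \<le> c2"
  shows "0 < c0 + c1*L + c2*L^2"
proof -
  have "0 \<le> c1*L" using assms by simp
  moreover have "0 \<le> c2*L^2" using assms by simp
  ultimately show ?thesis using assms by linarith
qed

lemma a_low_mult:
  fixes a g gmin :: real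
  assumes "0 \<le> a" "a \<le> amax" "gmin \<le> g" "gmin \<le> 0"
  shows "amax * gmin \<le> a * g"
proof -
  have "a * gmin \<le> a * g" using assms by (intro mult_left_mono) auto
  moreover have "amax * gmin \<le> a * gmin" using assms by (intro mult_right_mono_neg) auto
  ultimately show ?thesis by linarith
qed

lemma a_up_mult:
  fixes a h hmax :: real
  assumes "0 \<le> a" "a \<le> amax" "h \<le> hmax" "0 \<le> hmax"
  shows "a * h \<le> amax * hmax"
proof -
  have "a * h \<le> a * hmax" using assms by (intro mult_left_mono) auto
  moreover have "a * hmax \<le> amax * hmax" using assms by (intro mult_right_mono) auto
  ultimately show ?thesis by linarith
qed

locale params =
  fixes a l :: real
  assumes a_lo: "1007/10000 \<le> a" and a_hi: "a \<le> 1015/10000"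
    and l_lo: "2/3 \<le> l" and l_hi: "l \<le> 25/36"
begin

lemma a0: "0 \<le> a" using a_lo by simp

lemma l2: "l^2 \<le> 625/1296"
proof -
  have "l^2 \<le> (25/36)^2" using l_lo l_hi by (intro power_mono) auto
  then show ?thesis by (simp add: power_divide)
qed

lemma N1: "0 \<le> L \<Longrightarrow> Ua a L < Fa a L"
proof -
  assume L: "0 \<le> L"
  have eq: "Fa a L - Ua a L = (583/500 - 136/25*a) + (1137/500 - 6*a)*L + (2*a)*L^2"
    unfolding Ua_def Fa_def by (simp add: field_simps power2_eq_square)
  have "0 < (583/500 - 136/25*a) + (1137/500 - 6*a)*L + (2*a)*L^2"
    using a_hi a0 L by (intro combo) auto
  then show ?thesis using eq by linarith
qed

lemma N2: "l \<le> L \<Longrightarrow> Ua a L + Ua a (L-l)/2 < Fa a L"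
proof -
  assume L: "l \<le> L"
  have eq: "Fa a L - (Ua a L + Ua a (L-l)/2) = (333/500 + 1/4*l + a*(3*l - 1/2*l^2 - 204/25)) + (253/125 - a*(9 - l))*L + (3/2*a)*L^2"
    unfolding Ua_def Fa_def by (simp add: field_simps power2_eq_square)
  have G: "-6402/1000 \<le> 3*l - 1/2*l^2 - 204/25" using l_lo l2 by linarith
  have aG: "1015/10000 * (-6402/1000) \<le> a*(3*l - 1/2*l^2 - 204/25)"
    by (rule a_low_mult[OF a0 a_hi G]) simp
  have aH: "a*(9 - l) \<le> 1015/10000 * (25/3)" by (rule a_up_mult[OF a0 a_hi]) (use l_lo in auto)
  have "0 < (333/500 + 1/4*l + a*(3*l - 1/2*l^2 - 204/25)) + (253/125 - a*(9 - l))*L + (3/2*a)*L^2"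
    using aG aH a0 L l_lo by (intro combo) auto
  then show ?thesis using eq by linarith
qed

lemma N3: "2*l \<le> L \<Longrightarrow> Ua a L + Ua a (L-l)/2 + Ua a (L-2*l)/2 < Fa a L"
proof -
  assume L: "2*l \<le> L"
  have eq: "Fa a L - (Ua a L + Ua a (L-l)/2 + Ua a (L-2*l)/2) = (83/500 + 3/4*l + a*(9*l - 5/2*l^2 - 272/25)) + (887/500 - a*(12 - 3*l))*L + a*L^2"
    unfolding Ua_def Fa_def by (simp add: field_simps power2_eq_square)
  have G: "-6086/1000 \<le> 9*l - 5/2*l^2 - 272/25" using l_lo l2 by linarith
  have aG: "1015/10000 * (-6086/1000) \<le> a*(9*l - 5/2*l^2 - 272/25)"
    by (rule a_low_mult[OF a0 a_hi G]) simp
  have aH: "a*(12 - 3*l) \<le> 1015/10000 * 10" by (rule a_up_mult[OF a0 a_hi]) (use l_lo in auto)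
  have "0 < (83/500 + 3/4*l + a*(9*l - 5/2*l^2 - 272/25)) + (887/500 - a*(12 - 3*l))*L + a*L^2"
    using aG aH a0 L l_lo by (intro combo) auto
  then show ?thesis using eq by linarith
qed

lemma N4: "3*l \<le> L \<Longrightarrow> Ua a L + Ua a (L-l)/2 + Ua a (L-2*l)/2 + Ua a (L-3*l) < Fa a L"
proof -
  assume L: "3*l \<le> L"
  have eq: "Fa a L - (Ua a L + Ua a (L-l)/2 + Ua a (L-2*l)/2 + Ua a (L-3*l)) = (-417/500 + 9/4*l + a*(27*l - 23/2*l^2 - 408/25)) + (637/500 - a*(18 - 9*l))*L + 0*L^2"
    unfolding Ua_def Fa_def by (simp add: field_simps power2_eq_square)
  have G: "-387/100 \<le> 27*l - 23/2*l^2 - 408/25" using l_lo l2 by linarith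
  have aG: "1015/10000 * (-387/100) \<le> a*(27*l - 23/2*l^2 - 408/25)"
    by (rule a_low_mult[OF a0 a_hi G]) simp
  have aH: "a*(18 - 9*l) \<le> 1015/10000 * 12" by (rule a_up_mult[OF a0 a_hi]) (use l_lo in auto)
  have "0 < (-417/500 + 9/4*l + a*(27*l - 23/2*l^2 - 408/25)) + (637/500 - a*(18 - 9*l))*L + 0*L^2"
    using aG aH a0 L l_lo by (intro combo) auto
  then show ?thesis using eq by linarith
qed

lemma N5: "2*l \<le> L \<Longrightarrow> Ua a L + Ua a (L-l)/2 + Fa a (L-2*l)/2 < Fa a L"
proof -
  assume L: "2*l \<le> L"
  have eq: "Fa a L - (Ua a L + Ua a (L-l)/2 + Fa a (L-2*l)/2) = (-417/1000 + 378/125*l + a*(3*l - 13/2*l^2 - 204/25)) + (637/1000 - a*(9 - 7*l))*L + 0*L^2"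
    unfolding Ua_def Fa_def by (simp add: field_simps power2_eq_square)
  have G: "-93/10 \<le> 3*l - 13/2*l^2 - 204/25" using l_lo l2 by linarith
  have aG: "1015/10000 * (-93/10) \<le> a*(3*l - 13/2*l^2 - 204/25)"
    by (rule a_low_mult[OF a0 a_hi G]) simp
  have aH: "a*(9 - 7*l) \<le> 1015/10000 * (13/3)" by (rule a_up_mult[OF a0 a_hi]) (use l_lo in auto)
  have "0 < (-417/1000 + 378/125*l + a*(3*l - 13/2*l^2 - 204/25)) + (637/1000 - a*(9 - 7*l))*L + 0*L^2"
    using aG aH a0 L l_lo by (intro combo) auto
  then show ?thesis using eq by linarith
qed

end


lemma div_div_dvd:
  fixes x m :: nat
  assumes "x dvd m" "m > 0"
  shows "m div (m div x) = x"
proof -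
  obtain q where q: "m = x * q" using assms(1) by blast
  have "x * q \<noteq> 0" using q assms(2) by simp
  then have "x > 0" "q > 0" by auto
  then show ?thesis using q by simp
qed

lemma tau_bound:
  fixes n :: nat
  assumes n2: "2 \<le> n"
  shows "tau (n^2 - 1) \<le> 2 * card {d. 0 < d \<and> d < n \<and> d dvd n^2 - 1}"
proof -
  define m where "m = n^2 - 1"
  have "2*2 \<le> n*n" using n2 by (intro mult_le_mono) auto
  then have nn: "n^2 \<ge> 4" by (simp add: power2_eq_square)
  have m0: "m > 0" using nn by (simp add: m_def)
  have mlt: "m < n * n" using n2 by (simp add: m_def power2_eq_square)
  define Sm where "Sm = {d. 0 < d \<and> d < n \<and> d dvd m}"
  define Bg where "Bg = {d. n \<le> d \<and> d dvd m}"
  have finS: "finite Sm" by (simp add: Sm_def)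
  have finB: "finite Bg" by (rule finite_subset[of _ "{..m}"]) (auto simp: Bg_def m0 dvd_imp_le)
  have sub: "{d. d dvd m} \<subseteq> Sm \<union> Bg" using m0 by (auto simp: Sm_def Bg_def intro: Nat.gr0I)
  have c1: "card {d. d dvd m} \<le> card Sm + card Bg"
    using card_mono[OF _ sub] card_Un_le[of Sm Bg] finS finB by simp
  have im: "(\<lambda>d. m div d) ` Bg \<subseteq> Sm"
  proof
    fix e assume "e \<in> (\<lambda>d. m div d) ` Bg"
    then obtain d where e: "e = m div d" and d: "n \<le> d" "d dvd m" by (auto simp: Bg_def)
    obtain q where q: "m = d * q" using d by blast
    have d0: "d > 0" using d n2 by simp
    have eq: "e = q" using e q d0 by simp
    have q0: "q > 0" using q m0 by (cases q) auto
    have "q < n"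
    proof (rule ccontr)
      assume "\<not> q < n"
      then have "n * n \<le> d * q" using d by (intro mult_le_mono) auto
      then show False using q mlt by simp
    qed
    moreover have "q dvd m" using q by simp
    ultimately show "e \<in> Sm" using eq q0 by (simp add: Sm_def)
  qed
  have inj: "inj_on (\<lambda>d. m div d) Bg"
  proof (rule inj_onI)
    fix x y assume xy: "x \<in> Bg" "y \<in> Bg" "m div x = m div y"
    have "x = m div (m div x)" using xy(1) m0 by (simp add: Bg_def div_div_dvd)
    also have "\<dots> = m div (m div y)" using xy(3) by simp
    also have "\<dots> = y" using xy(2) m0 by (simp add: Bg_def div_div_dvd)
    finally show "x = y" .
  qed
  have c2: "card Bg \<le> card Sm" using card_inj_on_le[OF inj im finS] .
  have "tau m = card {d. d dvd m}" using m0 by (simp add: tau_def)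
  then show ?thesis using c1 c2 by (simp add: Sm_def m_def)
qed

lemma fiber_bound:
  fixes d N :: nat
  assumes d0: "0 < d"
  shows "card {n \<in> {1..N}. d < n \<and> d dvd n^2 - 1} \<le> rho 1 d * (N div d)"
proof -
  define S where "S = {x. x < d \<and> x^2 mod d = 1 mod d}"
  define T where "T = {n \<in> {1..N}. d < n \<and> d dvd n^2 - 1}"
  have im: "(\<lambda>n. (n mod d, n div d)) ` T \<subseteq> S \<times> {1..N div d}"
  proof
    fix z assume "z \<in> (\<lambda>n. (n mod d, n div d)) ` T"
    then obtain n where z: "z = (n mod d, n div d)" and n: "1 \<le> n" "n \<le> N" "d < n" "d dvd n^2 - 1"
      by (auto simp: T_def)
    have n2: "n^2 \<ge> 1" using n(1) by simp
    have "n^2 = (n^2 - 1) + 1" using n2 by simp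
    then have "n^2 mod d = ((n^2 - 1) + 1) mod d" by (rule arg_cong)
    also have "\<dots> = ((n^2 - 1) mod d + 1) mod d" by (simp only: mod_add_left_eq)
    also have "\<dots> = 1 mod d" using n(4) by simp
    finally have "(n mod d)^2 mod d = 1 mod d" by (simp add: power_mod)
    moreover have "n mod d < d" using d0 by simp
    moreover have "1 \<le> n div d" using n(3) d0 by (simp add: div_greater_zero_iff Suc_le_eq)
    moreover have "n div d \<le> N div d" using n(2) by (rule div_le_mono)
    ultimately show "z \<in> S \<times> {1..N div d}" using z by (simp add: S_def)
  qed
  have inj: "inj_on (\<lambda>n. (n mod d, n div d)) T"
  proof (rule inj_onI)
    fix x y assume "(x mod d, x div d) = (y mod d, y div d)"
    then have "x mod d = y mod d" "x div d = y div d" by auto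
    then show "x = y" by (metis div_mult_mod_eq)
  qed
  have fin: "finite (S \<times> {1..N div d})" by (simp add: S_def)
  have "card T \<le> card (S \<times> {1..N div d})" by (rule card_inj_on_le[OF inj im fin])
  also have "\<dots> = rho 1 d * (N div d)" by (simp add: card_cartesian_product S_def rho_def)
  finally show ?thesis by (simp add: T_def)
qed

lemma tau_sum_bound:
  fixes N :: nat
  shows "(\<Sum>n=1..N. tau (n^2 - 1)) \<le> 2 * (\<Sum>d=1..N. rho 1 d * (N div d))"
proof -
  define R where "R n d \<longleftrightarrow> d < n \<and> d dvd n^2 - 1" for n d :: nat
  have each: "tau (n^2 - 1) \<le> 2 * card {d \<in> {1..N}. R n d}" if n: "n \<in> {1..N}" for n
  proof (cases "n = 1")
    case True then show ?thesis by (simp add: tau_def)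
  next
    case False
    then have n2: "2 \<le> n" using n by simp
    have "{d. 0 < d \<and> d < n \<and> d dvd n^2 - 1} = {d \<in> {1..N}. R n d}" using n by (auto simp: R_def)
    then show ?thesis using tau_bound[OF n2] by simp
  qed
  have "(\<Sum>n=1..N. tau (n^2 - 1)) \<le> (\<Sum>n=1..N. 2 * card {d \<in> {1..N}. R n d})"
    using each by (intro sum_mono) blast
  also have "\<dots> = 2 * (\<Sum>n=1..N. card {d \<in> {1..N}. R n d})" by (simp add: sum_distrib_left)
  also have "(\<Sum>n=1..N. card {d \<in> {1..N}. R n d}) = (\<Sum>n=1..N. \<Sum>d\<in>{d \<in> {1..N}. R n d}. (1::nat))" by simp
  also have "\<dots> = (\<Sum>d=1..N. \<Sum>n\<in>{n \<in> {1..N}. R n d}. (1::nat))" by (rule sum.swap_restrict) auto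
  also have "\<dots> = (\<Sum>d=1..N. card {n \<in> {1..N}. R n d})" by simp
  also have "\<dots> \<le> (\<Sum>d=1..N. rho 1 d * (N div d))"
    by (intro sum_mono) (use fiber_bound in \<open>auto simp: R_def\<close>)
  finally show ?thesis by simp
qed


lemma a_bounds: "1007/10000 \<le> 1/pi^2" "1/pi^2 \<le> 1015/10000"
proof -
  have "1/(99225/10000) \<le> 1/pi^2" using pi_sq_bounds by (intro divide_left_mono) auto
  moreover have "(1007/10000::real) \<le> 1/(99225/10000)" by simp
  ultimately show "1007/10000 \<le> 1/pi^2" by (meson order.trans)
  have "1/pi^2 \<le> 1/(98596/10000)" using pi_sq_bounds by (intro divide_left_mono) auto
  moreover have "1/(98596/10000) \<le> (1015/10000::real)" by simp
  ultimately show "1/pi^2 \<le> 1015/10000" by (meson order.trans)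
qed

interpretation P: params "1/pi^2" "ln 2"
  using a_bounds ln2_ge_two_thirds ln2_le_25_over_36 by unfold_locales auto

lemma Vb: "y \<ge> 1 \<Longrightarrow> Vsum y \<le> Ua (1/pi^2) (ln y)"
  using Vsum_bound[of y] by (simp add: Ua_def)

lemma ln_div2: "(y::real) > 0 \<Longrightarrow> ln (y/2) = ln y - ln 2"
  by (simp add: ln_div)

lemma ln_div4: "(y::real) > 0 \<Longrightarrow> ln (y/4) = ln y - 2 * ln 2"
proof -
  assume "y > 0"
  have "ln (4::real) = 2 * ln 2" using ln_realpow[of 2 2] by simp
  then show ?thesis using \<open>y > 0\<close> by (simp add: ln_div)
qed

lemma ln_div8: "(y::real) > 0 \<Longrightarrow> ln (y/8) = ln y - 3 * ln 2"
proof -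
  assume "y > 0"
  have "ln (8::real) = 3 * ln 2" using ln_realpow[of 2 3] by simp
  then show ?thesis using \<open>y > 0\<close> by (simp add: ln_div)
qed

lemma ln_ge_mult: "(y::real) \<ge> 2^k \<Longrightarrow> real k * ln 2 \<le> ln y"
proof -
  assume y: "y \<ge> 2^k"
  have p: "(0::real) < 2^k" by simp
  have y0: "y > 0" by (rule less_le_trans[OF p y])
  have "ln ((2::real)^k) \<le> ln y" using ln_le_cancel_iff[OF p y0] y by simp
  then show ?thesis by (simp add: ln_realpow)
qed

lemma Ssum_lt: "\<forall>y. 1 \<le> y \<longrightarrow> Ssum s y < Fa (1/pi^2) (ln y)"
proof (induction s)
  case 0
  show ?case
  proof (intro allI impI)
    fix y :: real assume y1: "1 \<le> y"
    have y0: "y > 0" using y1 by simp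
    have L0: "0 \<le> ln y" using y1 by simp
    have base: "Ssum 0 y \<le> Vsum y + Vsum (y/2) / 2 + Vsum (y/4) / 2 + Vsum (y/8)" by (rule Ssum_base)
    have V1: "Vsum y \<le> Ua (1/pi^2) (ln y)" using Vb[OF y1] .
    consider "y < 2" | "2 \<le> y" "y < 4" | "4 \<le> y" "y < 8" | "8 \<le> y" by linarith
    then show "Ssum 0 y < Fa (1/pi^2) (ln y)"
    proof cases
      case 1
      then have "Vsum (y/2) = 0" "Vsum (y/4) = 0" "Vsum (y/8) = 0" by (simp_all add: Vsum_zero)
      then show ?thesis using base V1 P.N1[OF L0] by linarith
    next
      case 2
      then have z: "Vsum (y/4) = 0" "Vsum (y/8) = 0" by (simp_all add: Vsum_zero)
      have V2: "Vsum (y/2) \<le> Ua (1/pi^2) (ln y - ln 2)" using Vb[of "y/2"] 2 ln_div2[OF y0] by simp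
      have N: "Ua (1/pi^2) (ln y) + Ua (1/pi^2) (ln y - ln 2)/2 < Fa (1/pi^2) (ln y)"
        using P.N2 ln_ge_mult[of 1 y] 2 by simp
      show ?thesis using base V1 V2 z N by linarith
    next
      case 3
      then have z: "Vsum (y/8) = 0" by (simp_all add: Vsum_zero)
      have V2: "Vsum (y/2) \<le> Ua (1/pi^2) (ln y - ln 2)" using Vb[of "y/2"] 3 ln_div2[OF y0] by simp
      have V3: "Vsum (y/4) \<le> Ua (1/pi^2) (ln y - 2*ln 2)" using Vb[of "y/4"] 3 ln_div4[OF y0] by simp
      have N: "Ua (1/pi^2) (ln y) + Ua (1/pi^2) (ln y - ln 2)/2 + Ua (1/pi^2) (ln y - 2*ln 2)/2 < Fa (1/pi^2) (ln y)"
        using P.N3 ln_ge_mult[of 2 y] 3 by simp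
      show ?thesis using base V1 V2 V3 z N by linarith
    next
      case 4
      have V2: "Vsum (y/2) \<le> Ua (1/pi^2) (ln y - ln 2)" using Vb[of "y/2"] 4 ln_div2[OF y0] by simp
      have V3: "Vsum (y/4) \<le> Ua (1/pi^2) (ln y - 2*ln 2)" using Vb[of "y/4"] 4 ln_div4[OF y0] by simp
      have V4: "Vsum (y/8) \<le> Ua (1/pi^2) (ln y - 3*ln 2)" using Vb[of "y/8"] 4 ln_div8[OF y0] by simp
      have N: "Ua (1/pi^2) (ln y) + Ua (1/pi^2) (ln y - ln 2)/2 + Ua (1/pi^2) (ln y - 2*ln 2)/2 + Ua (1/pi^2) (ln y - 3*ln 2) < Fa (1/pi^2) (ln y)"
        using P.N4 ln_ge_mult[of 3 y] 4 by simp
      show ?thesis using base V1 V2 V3 V4 N by linarith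
    qed
  qed
next
  case (Suc s)
  show ?case
  proof (intro allI impI)
    fix y :: real assume y1: "1 \<le> y"
    have y0: "y > 0" using y1 by simp
    have L0: "0 \<le> ln y" using y1 by simp
    have step: "Ssum (Suc s) y \<le> Vsum y + Vsum (y/2) / 2 + Ssum s (y/4) / 2" by (rule Ssum_step)
    have V1: "Vsum y \<le> Ua (1/pi^2) (ln y)" using Vb[OF y1] .
    consider "y < 2" | "2 \<le> y" "y < 4" | "4 \<le> y" by linarith
    then show "Ssum (Suc s) y < Fa (1/pi^2) (ln y)"
    proof cases
      case 1
      then have "Vsum (y/2) = 0" "Ssum s (y/4) = 0" by (simp_all add: Vsum_zero Ssum_zero)
      then show ?thesis using step V1 P.N1[OF L0] by linarith
    next
      case 2
      then have z: "Ssum s (y/4) = 0" by (simp_all add: Ssum_zero)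
      have V2: "Vsum (y/2) \<le> Ua (1/pi^2) (ln y - ln 2)" using Vb[of "y/2"] 2 ln_div2[OF y0] by simp
      have N: "Ua (1/pi^2) (ln y) + Ua (1/pi^2) (ln y - ln 2)/2 < Fa (1/pi^2) (ln y)"
        using P.N2 ln_ge_mult[of 1 y] 2 by simp
      show ?thesis using step V1 V2 z N by linarith
    next
      case 3
      have V2: "Vsum (y/2) \<le> Ua (1/pi^2) (ln y - ln 2)" using Vb[of "y/2"] 3 ln_div2[OF y0] by simp
      have IH: "Ssum s (y/4) < Fa (1/pi^2) (ln y - 2*ln 2)"
        using Suc.IH[rule_format, of "y/4"] 3 ln_div4[OF y0] by simp
      have N: "Ua (1/pi^2) (ln y) + Ua (1/pi^2) (ln y - ln 2)/2 + Fa (1/pi^2) (ln y - 2*ln 2)/2 < Fa (1/pi^2) (ln y)"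
        using P.N5 ln_ge_mult[of 2 y] 3 by simp
      show ?thesis using step V1 V2 IH N by linarith
    qed
  qed
qed

theorem corollary4:
  fixes N :: nat
  assumes "N \<ge> 1"
  shows "(\<forall>s::nat. (\<Sum>l=1..N. real (rho (4 ^ s) l) / real l)
            < 3 / pi^2 * (ln (real N))^2 + 2.774 * ln (real N) + 2.166)
       \<and> (\<Sum>n=1..N. real (tau (n^2 - 1)))
            < real N * (6 / pi^2 * (ln (real N))^2 + 5.548 * ln (real N) + 4.332)"
proof -
  have Nr: "1 \<le> real N" using assms by simp
  have DsetN: "Dset (real N) = {1..N}" by (auto simp: Dset_def)
  have FaN: "Fa (1/pi^2) (ln (real N)) = 3 / pi^2 * (ln (real N))^2 + 2.774 * ln (real N) + 2.166"
    by (simp add: Fa_def)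
  have part1: "\<forall>s::nat. (\<Sum>l=1..N. real (rho (4 ^ s) l) / real l)
            < 3 / pi^2 * (ln (real N))^2 + 2.774 * ln (real N) + 2.166"
  proof
    fix s :: nat
    have "(\<Sum>l=1..N. real (rho (4 ^ s) l) / real l) = Ssum s (real N)" by (simp add: Ssum_def DsetN)
    also have "\<dots> < Fa (1/pi^2) (ln (real N))" using Ssum_lt[of s] Nr by blast
    finally show "(\<Sum>l=1..N. real (rho (4 ^ s) l) / real l) < 3 / pi^2 * (ln (real N))^2 + 2.774 * ln (real N) + 2.166"
      using FaN by simp
  qed
  have part2: "(\<Sum>n=1..N. real (tau (n^2 - 1))) < real N * (6 / pi^2 * (ln (real N))^2 + 5.548 * ln (real N) + 4.332)"
  proof -
    have "(\<Sum>n=1..N. real (tau (n^2 - 1))) = real (\<Sum>n=1..N. tau (n^2 - 1))" by simp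
    also have "\<dots> \<le> real (2 * (\<Sum>d=1..N. rho 1 d * (N div d)))"
      using tau_sum_bound[of N] by (simp only: of_nat_le_iff)
    also have "\<dots> = 2 * (\<Sum>d=1..N. real (rho 1 d) * real (N div d))" by simp
    also have "\<dots> \<le> 2 * (\<Sum>d=1..N. real (rho 1 d) * (real N / real d))"
      by (intro mult_left_mono sum_mono) (auto intro: of_nat_div_le_of_nat)
    also have "(\<Sum>d=1..N. real (rho 1 d) * (real N / real d)) = real N * Ssum 0 (real N)"
      by (simp add: Ssum_def DsetN sum_distrib_left mult.commute)
    also have "2 * (real N * Ssum 0 (real N)) < 2 * (real N * Fa (1/pi^2) (ln (real N)))"
      using Ssum_lt[of 0] Nr by simp
    also have "2 * (real N * Fa (1/pi^2) (ln (real N))) = real N * (6 / pi^2 * (ln (real N))^2 + 5.548 * ln (real N) + 4.332)"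
      by (simp add: Fa_def algebra_simps)
    finally show ?thesis .
  qed
  show ?thesis using part1 part2 by blast
qed


end
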